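(* Let $\Omega\subset\mathbb{R}^N$ be a domain (an open, connected set) and let $r>0$. Then $\Omega$ satisfies the two-sided supporting $r$-sphere condition $(\mathrm{S}_r)$ if and only if it satisfies the $1/r$-Lipschitz normal condition $(\mathrm{L}_r)$.
   Context: $B_r(a)$ denotes the open Euclidean ball of radius $r$ centered at $a$; $\bar\Omega$ is the closure and $\partial\Omega$ the boundary of $\Omega$. Condition $(\mathrm{S}_r)$: for every $x_0\in\partial\Omega$ there exist $a,b\in\mathbb{R}^N$ such that $B_r(a)\subset\Omega$, $B_r(b)\subset\mathbb{R}^N\setminus\bar\Omega$ and $|x_0-a|=|x_0-b|=r$. $C^1$ regularity of $\partial\Omega$: for every $x_0\in\partial\Omega$ there exist $\rho,h>0$, a rigid map $T(x)=Ax+c$ ($A\in SO(N)$, $c\in\mathbb{R}^N$) with $T(x_0)=0$, and a $C^1$ function $\phi:\bar B_\rho(0)\subset\mathbb{R}^{N-1}\to(-h,h)$ with $\phi(0)=0$, $\nabla\phi(0)=0$, such that for the cylinder $\mathcal{C}=B_\rho(0)\times(-h,h)$ one has $\mathcal{C}\cap T(\Omega)=\{(x',x_N)\in\mathcal{C}: x_N<\phi(x')\}$ and $\mathcal{C}\cap T(\partial\Omega)=\{(x',x_N)\in\mathcal{C}: x_N=\phi(x')\}$. Under this condition the outward unit normal $\vec n:\partial\Omega\to\mathbb{R}^N$ is well defined (in local coordinates with $T=\mathrm{id}$, $\vec n(x',\phi(x'))=(-\nabla\phi(x'),1)/\sqrt{|\nabla\phi(x')|^2+1}$). Condition $(\mathrm{L}_r)$: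 $\partial\Omega$ is $C^1$ regular and $|\vec n(x_0)-\vec n(y_0)|\le \frac1r|x_0-y_0|$ for all $x_0,y_0\in\partial\Omega$. *)

theory Defs
  imports "HOL-Analysis.Analysis"
begin

text \<open>Euclidean space R^N is modelled as real^('m option) with N = CARD('m) + 1:
  the coordinate None plays the role of x_N and the coordinates Some i form x' in R^(N-1)
  (modelled as real^'m).\<close>

definition tangential :: "real^('m::finite option) \<Rightarrow> real^'m" where
  "tangential x = (\<chi> i. x $ Some i)"

definition vertical :: "real^('m::finite option) \<Rightarrow> real" where
  "vertical x = x $ None"

definition join :: "real^'m::finite \<Rightarrow> real \<Rightarrow> real^('m option)" where
  "join x' t = (\<chi> j. case j of None \<Rightarrow> t | Some i \<Rightarrow> x' $ i)"

definition cond_S :: "real \<Rightarrow> (real^('m::finite option)) set \<Rightarrow> bool" where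
  "cond_S r \<Omega> \<longleftrightarrow> (\<forall>x0\<in>frontier \<Omega>. \<exists>a b.
      ball a r \<subseteq> \<Omega> \<and> ball b r \<subseteq> - closure \<Omega> \<and> dist x0 a = r \<and> dist x0 b = r)"

definition C1_chart ::
  "(real^('m::finite option)) set \<Rightarrow> real^('m option) \<Rightarrow> real \<Rightarrow> real
   \<Rightarrow> real^('m option)^('m option) \<Rightarrow> real^('m option)
   \<Rightarrow> (real^'m \<Rightarrow> real) \<Rightarrow> (real^'m \<Rightarrow> real^'m) \<Rightarrow> bool" where
  "C1_chart \<Omega> x0 \<rho> h A c \<phi> g \<longleftrightarrow>
     \<rho> > 0 \<and> h > 0 \<and> orthogonal_matrix A \<and> det A = 1 \<and> A *v x0 + c = 0 \<and>
     (\<forall>y\<in>cball 0 \<rho>. \<phi> y \<in> {-h<..<h}) \<and> \<phi> 0 = 0 \<and> g 0 = 0 \<and>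
     continuous_on (cball 0 \<rho>) g \<and>
     (\<forall>y\<in>cball 0 \<rho>. (\<phi> has_derivative (\<lambda>v. g y \<bullet> v)) (at y within cball 0 \<rho>)) \<and>
     (let T = (\<lambda>x. A *v x + c);
          C = {x. norm (tangential x) < \<rho> \<and> \<bar>vertical x\<bar> < h} in
       C \<inter> T ` \<Omega> = {x\<in>C. vertical x < \<phi> (tangential x)} \<and>
       C \<inter> T ` frontier \<Omega> = {x\<in>C. vertical x = \<phi> (tangential x)})"

definition C1_boundary :: "(real^('m::finite option)) set \<Rightarrow> bool" where
  "C1_boundary \<Omega> \<longleftrightarrow> (\<forall>x0\<in>frontier \<Omega>. \<exists>\<rho> h A c \<phi> g. C1_chart \<Omega> x0 \<rho> h A c \<phi> g)"

definition outward_normal ::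
  "(real^('m::finite option)) set \<Rightarrow> (real^('m option) \<Rightarrow> real^('m option)) \<Rightarrow> bool" where
  "outward_normal \<Omega> n \<longleftrightarrow> (\<forall>x0\<in>frontier \<Omega>. \<exists>\<rho> h A c \<phi> g. C1_chart \<Omega> x0 \<rho> h A c \<phi> g \<and>
     (\<forall>y\<in>ball 0 \<rho>.
        n (matrix_inv A *v (join y (\<phi> y) - c)) =
          matrix_inv A *v ((1 / sqrt ((norm (g y))\<^sup>2 + 1)) *\<^sub>R join (- g y) 1)))"

definition cond_L :: "real \<Rightarrow> (real^('m::finite option)) set \<Rightarrow> bool" where
  "cond_L r \<Omega> \<longleftrightarrow> C1_boundary \<Omega> \<and> (\<exists>n. outward_normal \<Omega> n \<and>
     (\<forall>x0\<in>frontier \<Omega>. \<forall>y0\<in>frontier \<Omega>. norm (n x0 - n y0) \<le> (1 / r) * norm (x0 - y0)))"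

end

theory Submission
  imports Defs
begin

lemma tangential_join[simp]: "tangential (join y t) = y"
  by (simp add: tangential_def join_def)

lemma vertical_join[simp]: "vertical (join y t) = t"
  by (simp add: vertical_def join_def)

lemma join_tv[simp]: "join (tangential x) (vertical x) = x"
  by (simp add: vec_eq_iff tangential_def vertical_def join_def split: option.split)

lemma join_eq_iff: "join y t = x \<longleftrightarrow> y = tangential x \<and> t = vertical x"
  by (metis join_tv tangential_join vertical_join)

lemma eq_join_iff: "x = join y t \<longleftrightarrow> tangential x = y \<and> vertical x = t"
  by (metis join_tv tangential_join vertical_join)

lemma tangential_add[simp]: "tangential (x + y) = tangential x + tangential y"
  and tangential_diff[simp]: "tangential (x - y) = tangential x - tangential y"
  and tangential_minus[simp]: "tangential (- x) = - tangential x"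
  and tangential_scaleR[simp]: "tangential (c *\<^sub>R x) = c *\<^sub>R tangential x"
  and tangential_zero[simp]: "tangential 0 = 0"
  by (simp_all add: tangential_def vec_eq_iff)

lemma vertical_add[simp]: "vertical (x + y) = vertical x + vertical y"
  and vertical_diff[simp]: "vertical (x - y) = vertical x - vertical y"
  and vertical_minus[simp]: "vertical (- x) = - vertical x"
  and vertical_scaleR[simp]: "vertical (c *\<^sub>R x) = c * vertical x"
  and vertical_zero[simp]: "vertical 0 = 0"
  by (simp_all add: vertical_def)

lemma inner_split: "x \<bullet> y = tangential x \<bullet> tangential y + vertical x * vertical y"
proof -
  have "x \<bullet> y = (\<Sum>i\<in>UNIV. x $ i * y $ i)" by (simp add: inner_vec_def)
  also have "\<dots> = x $ None * y $ None + (\<Sum>i\<in>range Some. x $ i * y $ i)"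
    by (simp add: UNIV_option_conv sum.insert)
  also have "(\<Sum>i\<in>range Some. x $ i * y $ i) = (\<Sum>j\<in>UNIV. x $ Some j * y $ Some j)"
    by (subst sum.reindex) auto
  finally show ?thesis
    by (simp add: inner_vec_def tangential_def vertical_def)
qed

lemma norm_split: "(norm x)\<^sup>2 = (norm (tangential x))\<^sup>2 + (vertical x)\<^sup>2"
  by (metis inner_split power2_norm_eq_inner power2_eq_square)

lemma norm_join: "(norm (join y t))\<^sup>2 = (norm y)\<^sup>2 + t\<^sup>2"
  using norm_split[of "join y t"] by simp

lemma norm_tangential_le: "norm (tangential x) \<le> norm x"
proof -
  have "(norm (tangential x))\<^sup>2 \<le> (norm x)\<^sup>2" using norm_split[of x] by simp
  then show ?thesis by (rule power2_le_imp_le) simp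
qed

lemma abs_vertical_le: "\<bar>vertical x\<bar> \<le> norm x"
proof -
  have "(\<bar>vertical x\<bar>)\<^sup>2 \<le> (norm x)\<^sup>2" using norm_split[of x] by simp
  then show ?thesis by (rule power2_le_imp_le) simp
qed

lemma join_diff: "join y1 t1 - join y2 t2 = join (y1 - y2) (t1 - t2)"
  by (simp add: eq_join_iff)

lemma join_add: "join y1 t1 + join y2 t2 = join (y1 + y2) (t1 + t2)"
  by (simp add: eq_join_iff)

lemma join_minus: "- join y t = join (- y) (- t)"
  by (simp add: eq_join_iff)

lemma join_scaleR: "c *\<^sub>R join y t = join (c *\<^sub>R y) (c * t)"
  by (metis join_eq_iff tangential_join tangential_scaleR vertical_join vertical_scaleR)

lemma join_zero[simp]: "join 0 0 = 0"
  by (simp add: join_eq_iff)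

lemma norm_eN: "norm (join (0::real^'a::finite) 1) = 1"
proof -
  have "(norm (join (0::real^'a::finite) 1))\<^sup>2 = 1\<^sup>2" using norm_join[of "0::real^'a" 1] by simp
  then show ?thesis by (rule power2_eq_imp_eq) simp_all
qed

lemma inner_join: "join y t \<bullet> x = y \<bullet> tangential x + t * vertical x"
  by (simp add: inner_split)

lemma bounded_linear_tangential: "bounded_linear tangential"
  by (rule bounded_linear_intro[where K=1]) (auto simp: norm_tangential_le)

lemma bounded_linear_vertical: "bounded_linear vertical"
  by (rule bounded_linear_intro[where K=1]) (auto simp: abs_vertical_le)

lemma norm_join_le: "norm (join y t) \<le> norm y + \<bar>t\<bar>"
proof -
  have "(norm (join y t))\<^sup>2 \<le> (norm y + \<bar>t\<bar>)\<^sup>2"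
    unfolding norm_join by (simp add: power2_eq_square algebra_simps)
  then show ?thesis by (rule power2_le_imp_le) simp
qed

lemma orth_tA: "orthogonal_matrix A \<Longrightarrow> transpose A ** A = mat 1"
  and orth_At: "orthogonal_matrix A \<Longrightarrow> A ** transpose A = mat 1"
  by (simp_all add: orthogonal_matrix_def)

lemma orth_matrix_inv: "orthogonal_matrix (A::real^'n^'n) \<Longrightarrow> matrix_inv A = transpose A"
proof -
  assume o: "orthogonal_matrix A"
  have ex: "\<exists>A'. A ** A' = mat 1 \<and> A' ** A = mat 1"
    using o by (auto simp: orthogonal_matrix_def)
  have "A ** matrix_inv A = mat 1 \<and> matrix_inv A ** A = mat 1"
    unfolding matrix_inv_def by (rule someI_ex[OF ex])
  then have i: "matrix_inv A ** A = mat 1" by blast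
  have "matrix_inv A = matrix_inv A ** (A ** transpose A)"
    using o by (simp add: orthogonal_matrix_def)
  also have "\<dots> = (matrix_inv A ** A) ** transpose A"
    by (simp add: matrix_mul_assoc)
  also have "\<dots> = transpose A"
    using i by simp
  finally show ?thesis .
qed

lemma orth_transformation: "orthogonal_matrix (A::real^'n^'n) \<Longrightarrow> orthogonal_transformation ((*v) A)"
  by (simp add: orthogonal_transformation_matrix matrix_vector_mul_linear)

lemma orth_norm: "orthogonal_matrix (A::real^'n^'n) \<Longrightarrow> norm (A *v x) = norm x"
  using orth_transformation orthogonal_transformation by blast

lemma orth_inner: "orthogonal_matrix (A::real^'n^'n) \<Longrightarrow> (A *v x) \<bullet> (A *v y) = x \<bullet> y"
  using orth_transformation orthogonal_transformation_def by blast

lemma orth_inv_left: "orthogonal_matrix (A::real^'n^'n) \<Longrightarrow> transpose A *v (A *v x) = x"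
  and orth_inv_right: "orthogonal_matrix (A::real^'n^'n) \<Longrightarrow> A *v (transpose A *v x) = x"
  by (metis matrix_vector_mul_assoc matrix_vector_mul_lid orthogonal_matrix_def)+

lemma orth_transpose: "orthogonal_matrix (A::real^'n^'n) \<Longrightarrow> orthogonal_matrix (transpose A)"
  by simp

lemma arith1:
  fixes a D v k r :: real
  assumes "r > 0" "2*r*abs (k + D * v) \<le> a\<^sup>2 + D\<^sup>2" "v \<ge> 1/2" "v \<le> 1" "abs (k) \<le> a" "abs (D) \<le> r/2" "0 \<le> a" "a \<le> r/2"
  shows "abs (D) \<le> 5*a"
proof -
  have "abs (D) * v = abs ((k + D * v) - k)" using assms by (simp add: abs_mult)
  also have "\<dots> \<le> abs (k + D * v) + a" using assms by linarith
  finally have 1: "abs (D) * v \<le> abs (k + D * v) + a" .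
  have 2: "abs (D) * (1/2) \<le> abs (D) * v" using assms by (intro mult_left_mono) auto
  have "abs D * abs D \<le> abs (D) * (r/2)" using assms by (intro mult_left_mono) auto
  then have 3: "D\<^sup>2 \<le> abs (D) * (r/2)" by (simp add: power2_eq_square)
  have "a * a \<le> a * (r/2)" using assms by (intro mult_left_mono) auto
  then have 4: "a\<^sup>2 \<le> a * (r/2)" by (simp add: power2_eq_square)
  have e1: "abs D * (r/2) + a*(r/2) = r * ((a + abs D)/2)" by (simp add: algebra_simps)
  have e2: "2*r*abs (k + D * v) = r * (2*abs (k + D * v))" by simp
  have "r * (2*abs (k + D * v)) \<le> r * ((a + abs D)/2)" using assms(2) 3 4 e1 e2 by linarith
  then have "2*abs (k + D * v) \<le> (a + abs D)/2" using assms(1) by (rule mult_left_le_imp_le)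
  moreover have "\<And>X Y Z::real. 2*X \<le> (a+Y)/2 \<Longrightarrow> Z \<le> X + a \<Longrightarrow> Y*(1/2) \<le> Z \<Longrightarrow> Y \<le> 5*a" by argo
  ultimately show ?thesis using 1 2 by blast
qed

lemma arith2:
  fixes a D v k r :: real
  assumes "r > 0" "2*r*abs (k + D * v) \<le> a\<^sup>2 + D\<^sup>2" "v \<ge> 1/2" "abs (D) \<le> 5*a"
  shows "abs (D + k/v) \<le> 26 * a\<^sup>2 / r"
proof -
  have v: "v > 0" using assms by simp
  have "D + k/v = (k + D * v) / v" using v by (simp add: field_simps)
  then have e: "abs (D + k/v) = abs (k + D * v) / v" using v by (simp add: abs_divide)
  have "(abs D)\<^sup>2 \<le> (5*a)\<^sup>2" using assms by (intro power_mono) auto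
  then have D2: "D\<^sup>2 \<le> 25 * a\<^sup>2" by (simp add: power2_eq_square)
  have X: "r*abs (k + D * v) \<le> (a\<^sup>2 + D\<^sup>2)/2" using assms(2) by simp
  have "1 * (r * abs (k + D * v)) \<le> (2 * v) * (r*abs (k + D * v))"
    using assms by (intro mult_right_mono) auto
  then have "r * abs (k + D * v) \<le> (2 * v) * (r*abs (k + D * v))" by simp
  also have "\<dots> \<le> (2 * v) * ((a\<^sup>2 + D\<^sup>2)/2)" using X v by (intro mult_left_mono) auto
  also have "\<dots> \<le> (2 * v) * (13 * a\<^sup>2)" using D2 v by (intro mult_left_mono) auto
  finally have "r * abs (k + D * v) \<le> v * (26 * a\<^sup>2)" by simp
  then have "abs (k + D * v) / v \<le> 26 * a\<^sup>2 / r" using v assms(1) by (simp add: field_simps)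
  then show ?thesis using e by simp
qed


lemma seg_ball_sq:
  fixes v :: "real^('m::finite option)"
  assumes "norm v = 1"
  shows "(norm (r *\<^sub>R v - d *\<^sub>R join 0 1))\<^sup>2 = r\<^sup>2 - 2 * r * d * vertical v + d\<^sup>2"
proof -
  have "(norm (r *\<^sub>R v - d *\<^sub>R join 0 1))\<^sup>2 = (r *\<^sub>R v - d *\<^sub>R join 0 1) \<bullet> (r *\<^sub>R v - d *\<^sub>R join 0 1)"
    by (simp add: power2_norm_eq_inner)
  also have "\<dots> = r\<^sup>2 * (v \<bullet> v) - 2 * r * d * (v \<bullet> join 0 1) + d\<^sup>2 * (join 0 1 \<bullet> (join 0 1::real^('m option)))"
    by (simp add: inner_diff_left inner_diff_right inner_commute power2_eq_square algebra_simps)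
  also have "v \<bullet> v = 1" using assms power2_norm_eq_inner[of v] by simp
  also have "v \<bullet> join 0 1 = vertical v" by (subst inner_commute) (simp add: inner_join)
  also have "join 0 1 \<bullet> (join 0 1::real^('m option)) = 1" by (simp add: inner_join)
  finally show ?thesis by simp
qed

lemma seg_ball:
  fixes v :: "real^('m::finite option)"
  assumes "norm v = 1" "vertical v \<ge> 1/2" "0 < d" "d < r"
  shows "norm (r *\<^sub>R v - d *\<^sub>R join 0 1) < r"
proof -
  have "r * vertical v \<ge> r * (1/2)"
    using assms by (intro mult_left_mono) auto
  then have "d < 2 * (r * vertical v)" using assms by linarith
  then have "d * d < d * (2 * (r * vertical v))" using assms by (intro mult_strict_left_mono) auto
  then have "(norm (r *\<^sub>R v - d *\<^sub>R join 0 1))\<^sup>2 < r\<^sup>2"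
    unfolding seg_ball_sq[OF assms(1)] by (simp add: power2_eq_square algebra_simps)
  then show ?thesis using assms by (smt (verit) power2_le_imp_le)
qed

lemma frontier_open_notin: "open U \<Longrightarrow> q \<in> frontier U \<Longrightarrow> q \<notin> U"
  by (simp add: frontier_def interior_open)

lemma frontier_in_closure: "q \<in> frontier U \<Longrightarrow> q \<in> closure U"
  by (simp add: frontier_def)

lemma normalized_S:
  fixes U :: "(real^('m::finite option)) set" and \<nu> :: "real^('m option) \<Rightarrow> real^('m option)"
  assumes U: "open U" and r: "r > 0"
    and ib: "\<And>q. q \<in> frontier U \<Longrightarrow> ball (q - r *\<^sub>R \<nu> q) r \<subseteq> U"
    and eb: "\<And>q. q \<in> frontier U \<Longrightarrow> ball (q + r *\<^sub>R \<nu> q) r \<inter> closure U = {}"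
    and nu1: "\<And>q. q \<in> frontier U \<Longrightarrow> norm (\<nu> q) = 1"
    and lip: "\<And>p q. p \<in> frontier U \<Longrightarrow> q \<in> frontier U \<Longrightarrow> norm (\<nu> p - \<nu> q) \<le> norm (p - q) / r"
    and z: "0 \<in> frontier U" and nz: "\<nu> 0 = join 0 1"
  shows "\<exists>\<phi> g. (\<forall>y\<in>cball 0 (r/4). \<phi> y \<in> {-(r/4)<..<r/4}) \<and> \<phi> 0 = 0 \<and> g 0 = 0 \<and>
     continuous_on (cball 0 (r/4)) g \<and>
     (\<forall>y\<in>cball 0 (r/4). (\<phi> has_derivative (\<lambda>v. g y \<bullet> v)) (at y within cball 0 (r/4))) \<and>
     {x. norm (tangential x) < r/4 \<and> \<bar>vertical x\<bar> < r/4} \<inter> U =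
        {x\<in>{x. norm (tangential x) < r/4 \<and> \<bar>vertical x\<bar> < r/4}. vertical x < \<phi> (tangential x)} \<and>
     {x. norm (tangential x) < r/4 \<and> \<bar>vertical x\<bar> < r/4} \<inter> frontier U =
        {x\<in>{x. norm (tangential x) < r/4 \<and> \<bar>vertical x\<bar> < r/4}. vertical x = \<phi> (tangential x)} \<and>
     (\<forall>y\<in>ball 0 (r/4). \<nu> (join y (\<phi> y)) = (1 / sqrt ((norm (g y))\<^sup>2 + 1)) *\<^sub>R join (- g y) 1)"
proof -
  define F where "F = frontier U"
  define h where "h = r/4"
  define eN :: "real^('m option)" where "eN = join 0 1"
  have eN1: "norm eN = 1" by (simp add: eN_def norm_eN)
  have FnU: "q \<notin> U" if "q \<in> F" for q using frontier_open_notin[OF U] that F_def by blast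
  have FcU: "q \<in> closure U" if "q \<in> F" for q using frontier_in_closure that F_def by blast
  have inU: "x \<in> U" if "q \<in> F" "norm (x - (q - r *\<^sub>R \<nu> q)) < r" for q x
    using ib[of q] that F_def by (auto simp: dist_norm norm_minus_commute)
  have notclU: "x \<notin> closure U" if "q \<in> F" "norm (x - (q + r *\<^sub>R \<nu> q)) < r" for q x
    using eb[of q] that F_def by (auto simp: dist_norm norm_minus_commute)
  have notclU': "x \<notin> U \<and> x \<notin> F" if "q \<in> F" "norm (x - (q + r *\<^sub>R \<nu> q)) < r" for q x
    using notclU[OF that] FcU closure_subset by blast
  have inU': "x \<in> U \<and> x \<notin> F" if "q \<in> F" "norm (x - (q - r *\<^sub>R \<nu> q)) < r" for q x
    using inU[OF that] FnU by blast
  have nuN: "vertical (\<nu> q) \<ge> 1/2" if "q \<in> F" "norm q \<le> r/2" for q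
  proof -
    have "norm (\<nu> q - eN) \<le> norm (q - 0) / r" using lip[of q 0] that z nz F_def eN_def by simp
    also have "\<dots> \<le> 1/2" using that r by (simp add: field_simps)
    finally have "\<bar>vertical (\<nu> q - eN)\<bar> \<le> 1/2" using abs_vertical_le order_trans by blast
    then have "vertical (\<nu> q - eN) \<ge> -1/2" by (simp only: abs_le_iff) linarith
    then show ?thesis by (simp add: eN_def)
  qed
  have below: "q - d *\<^sub>R eN \<in> U \<and> q - d *\<^sub>R eN \<notin> F" if "q \<in> F" "norm q \<le> r/2" "0 < d" "d < r" for q d
  proof (rule inU'[OF that(1)])
    have "norm (r *\<^sub>R \<nu> q - d *\<^sub>R eN) < r"
      unfolding eN_def by (rule seg_ball) (use nu1[of q] nuN[of q] that F_def in auto)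
    then show "norm (q - d *\<^sub>R eN - (q - r *\<^sub>R \<nu> q)) < r" by (simp add: algebra_simps)
  qed
  have above: "q + d *\<^sub>R eN \<notin> U \<and> q + d *\<^sub>R eN \<notin> F" if "q \<in> F" "norm q \<le> r/2" "0 < d" "d < r" for q d
  proof (rule notclU'[OF that(1)])
    have "norm (r *\<^sub>R \<nu> q - d *\<^sub>R eN) < r"
      unfolding eN_def by (rule seg_ball) (use nu1[of q] nuN[of q] that F_def in auto)
    then show "norm (q + d *\<^sub>R eN - (q + r *\<^sub>R \<nu> q)) < r" by (simp add: algebra_simps norm_minus_commute)
  qed
  have jshift: "join y t = join y s + (t - s) *\<^sub>R eN" for y t s
    by (simp add: eN_def join_scaleR join_add)
  have h: "h > 0" "r = 4 * h" using r by (auto simp: h_def)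
  have nj: "norm (join y s) < r" if "norm y \<le> h" "\<bar>s\<bar> \<le> 3 * h" for y s
  proof -
    have "(norm y)\<^sup>2 \<le> h\<^sup>2" using that by (intro power_mono) auto
    moreover have "s\<^sup>2 \<le> (3*h)\<^sup>2" using that by (metis abs_le_square_iff abs_of_nonneg h(1) less_eq_real_def mult_pos_pos zero_less_numeral)
    moreover have "r * r = 16 * (h * h)" "3 * h * (3 * h) = 9 * (h * h)" using h(2) by simp_all
    ultimately have "(norm (join y s))\<^sup>2 < r\<^sup>2" unfolding norm_join using h mult_pos_pos[OF h(1) h(1)] unfolding power2_eq_square by linarith
    then show ?thesis using r power2_less_imp_less by fastforce
  qed
  have ex: "\<exists>t. \<bar>t\<bar> < h \<and> join y t \<in> F" if y: "norm y \<le> h" for y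
  proof -
    have p1: "join y (-h) \<in> U \<and> join y (-h) \<notin> F"
    proof (rule inU'[of 0])
      show "0 \<in> F" using z F_def by simp
      have "join y (- h) - (0 - r *\<^sub>R \<nu> 0) = join y (r - h)"
        by (simp add: nz eq_join_iff)
      then show "norm (join y (- h) - (0 - r *\<^sub>R \<nu> 0)) < r" using nj[OF y, of "r - h"] h by simp
    qed
    have p2: "join y h \<notin> U \<and> join y h \<notin> F"
    proof (rule notclU'[of 0])
      show "0 \<in> F" using z F_def by simp
      have "join y h - (0 + r *\<^sub>R \<nu> 0) = join y (h - r)"
        by (simp add: nz eq_join_iff)
      then show "norm (join y h - (0 + r *\<^sub>R \<nu> 0)) < r" using nj[OF y, of "h - r"] h by simp
    qed
    define S where "S = (\<lambda>t. join y t) ` {-h..h}"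
    have "continuous_on {-h..h} (\<lambda>t. join y 0 + t *\<^sub>R eN)"
      by (intro continuous_intros)
    moreover have "(\<lambda>t. join y 0 + t *\<^sub>R eN) = (\<lambda>t. join y t)"
      by (rule ext) (metis jshift diff_zero)
    ultimately have "continuous_on {-h..h} (\<lambda>t. join y t)" by metis
    then have cS: "connected S" unfolding S_def by (intro connected_continuous_image) auto
    have "join y (-h) \<in> S" "join y h \<in> S" unfolding S_def using h by auto
    then have "S \<inter> U \<noteq> {}" "S - U \<noteq> {}" using p1 p2 by blast+
    then have "S \<inter> frontier U \<noteq> {}" using connected_Int_frontier[OF cS] by blast
    then obtain t where t: "t \<in> {-h..h}" "join y t \<in> F" unfolding S_def F_def by blast
    have "t \<noteq> -h" "t \<noteq> h" using t p1 p2 by auto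
    with t show ?thesis by (intro exI[of _ t]) auto
  qed
  have nlt: "\<not> t1 < t2" if "norm y \<le> h" "\<bar>t1\<bar> < h" "\<bar>t2\<bar> < h" "join y t1 \<in> F" "join y t2 \<in> F" for y t1 t2
  proof
    assume lt: "t1 < t2"
    have "norm (join y t1) \<le> norm y + \<bar>t1\<bar>" by (rule norm_join_le)
    also have "\<dots> \<le> r/2" using that h by simp
    finally have "join y t1 + (t2 - t1) *\<^sub>R eN \<notin> F"
      using above[OF that(4), of "t2 - t1"] lt that h by simp
    then show False using that(5) jshift[of y t2 t1] by metis
  qed
  have uniq: "t1 = t2" if "norm y \<le> h" "\<bar>t1\<bar> < h" "\<bar>t2\<bar> < h" "join y t1 \<in> F" "join y t2 \<in> F" for y t1 t2
    using nlt[OF that] nlt[OF that(1,3,2,5,4)] by linarith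
  define \<phi> where "\<phi> y = (THE t. \<bar>t\<bar> < h \<and> join y t \<in> F)" for y
  have phi: "\<bar>\<phi> y\<bar> < h \<and> join y (\<phi> y) \<in> F" if "norm y \<le> h" for y
  proof -
    have "\<exists>!t. \<bar>t\<bar> < h \<and> join y t \<in> F" using ex[OF that] uniq[OF that] by blast
    then show ?thesis unfolding \<phi>_def by (rule theI')
  qed
  have phi_uniq: "t = \<phi> y" if "norm y \<le> h" "\<bar>t\<bar> < h" "join y t \<in> F" for y t
    using uniq[OF that(1,2) _ that(3)] phi[OF that(1)] by blast
  define G where "G y = join y (\<phi> y)" for y
  define N where "N y = \<nu> (G y)" for y
  define g where "g y = - (1 / vertical (N y)) *\<^sub>R tangential (N y)" for y
  have GF: "G y \<in> F" if "norm y \<le> h" for y using phi[OF that] by (simp add: G_def)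
  have nG: "norm (G y) \<le> r/2" if "norm y \<le> h" for y
    using norm_join_le[of y "\<phi> y"] phi[OF that] that h by (simp add: G_def)
  have vN: "vertical (N y) \<ge> 1/2" if "norm y \<le> h" for y
    using nuN[OF GF[OF that] nG[OF that]] by (simp add: N_def)
  have N1: "norm (N y) = 1" if "norm y \<le> h" for y
    using nu1 GF[OF that] by (simp add: N_def F_def)
  have vN1: "vertical (N y) \<le> 1" if "norm y \<le> h" for y
    using abs_vertical_le[of "N y"] N1[OF that] by simp
  have tN: "norm (tangential (N y)) \<le> 1" if "norm y \<le> h" for y
    using norm_tangential_le[of "N y"] N1[OF that] by simp
  have KI: "2 * r * abs ((z - y) \<bullet> tangential (N y) + (\<phi> z - \<phi> y) * vertical (N y))
              \<le> (norm (z - y))\<^sup>2 + (\<phi> z - \<phi> y)\<^sup>2"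
    if y: "norm y \<le> h" and zz: "norm z \<le> h" for y z
  proof -
    define w where "w = G z - G y"
    have w: "w = join (z - y) (\<phi> z - \<phi> y)" by (simp add: w_def G_def join_diff)
    have wN: "w \<bullet> N y = (z - y) \<bullet> tangential (N y) + (\<phi> z - \<phi> y) * vertical (N y)"
      by (simp add: w inner_join)
    have ww: "(norm w)\<^sup>2 = (norm (z - y))\<^sup>2 + (\<phi> z - \<phi> y)\<^sup>2" by (simp add: w norm_join)
    have "\<not> norm (G z - (G y - r *\<^sub>R \<nu> (G y))) < r" using inU'[OF GF[OF y], of "G z"] GF[OF zz] by blast
    then have a1: "r \<le> norm (w + r *\<^sub>R N y)" by (simp add: w_def N_def algebra_simps)
    have "\<not> norm (G z - (G y + r *\<^sub>R \<nu> (G y))) < r" using notclU'[OF GF[OF y], of "G z"] GF[OF zz] by blast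
    then have a2: "r \<le> norm (w - r *\<^sub>R N y)" by (simp add: w_def N_def algebra_simps)
    have sq: "(norm (w + c *\<^sub>R N y))\<^sup>2 = (norm w)\<^sup>2 + 2 * c * (w \<bullet> N y) + c\<^sup>2" for c
    proof -
      have "(norm (w + c *\<^sub>R N y))\<^sup>2 = (w + c *\<^sub>R N y) \<bullet> (w + c *\<^sub>R N y)" by (simp add: power2_norm_eq_inner)
      also have "\<dots> = w \<bullet> w + 2 * c * (w \<bullet> N y) + c\<^sup>2 * (N y \<bullet> N y)"
        by (simp add: inner_add_left inner_add_right inner_commute power2_eq_square algebra_simps)
      also have "N y \<bullet> N y = 1" using N1[OF y] power2_norm_eq_inner[of "N y"] by simp
      finally show ?thesis by (simp add: power2_norm_eq_inner)
    qed
    have "r\<^sup>2 \<le> (norm (w + r *\<^sub>R N y))\<^sup>2" using a1 r by (intro power_mono) auto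
    then have b1: "0 \<le> (norm w)\<^sup>2 + 2 * r * (w \<bullet> N y)" using sq[of r] by simp
    have "r\<^sup>2 \<le> (norm (w + (-r) *\<^sub>R N y))\<^sup>2" using a2 r by (intro power_mono) auto
    then have b2: "0 \<le> (norm w)\<^sup>2 - 2 * r * (w \<bullet> N y)" using sq[of "-r"] by simp
    have "2 * r * abs (w \<bullet> N y) \<le> (norm w)\<^sup>2"
      using b1 b2 r by (cases "w \<bullet> N y \<ge> 0") (auto simp: abs_if algebra_simps)
    then show ?thesis using wN ww by simp
  qed
  have kle: "abs ((z - y) \<bullet> tangential (N y)) \<le> norm (z - y)" if "norm y \<le> h" for y z
  proof -
    have "abs ((z - y) \<bullet> tangential (N y)) \<le> norm (z - y) * norm (tangential (N y))"
      by (rule Cauchy_Schwarz_ineq2)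
    also have "\<dots> \<le> norm (z - y) * 1" using tN[OF that] by (intro mult_left_mono) auto
    finally show ?thesis by simp
  qed
  have D5: "abs (\<phi> z - \<phi> y) \<le> 5 * norm (z - y)" if y: "norm y \<le> h" and zz: "norm z \<le> h" for y z
  proof (rule arith1[OF r KI[OF y zz] vN[OF y] vN1[OF y] kle[OF y]])
    show "abs (\<phi> z - \<phi> y) \<le> r/2" using phi[OF y] phi[OF zz] h by linarith
    show "0 \<le> norm (z - y)" by simp
    have "norm (z - y) \<le> norm z + norm y" by (rule norm_triangle_ineq4)
    then show "norm (z - y) \<le> r/2" using y zz h by linarith
  qed
  have Derr: "abs (\<phi> z - \<phi> y - g y \<bullet> (z - y)) \<le> 26 * (norm (z - y))\<^sup>2 / r"
    if y: "norm y \<le> h" and zz: "norm z \<le> h" for y z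
  proof -
    have "g y \<bullet> (z - y) = - ((z - y) \<bullet> tangential (N y)) / vertical (N y)"
      by (simp add: g_def inner_commute)
    then have "\<phi> z - \<phi> y - g y \<bullet> (z - y) = (\<phi> z - \<phi> y) + ((z - y) \<bullet> tangential (N y)) / vertical (N y)"
      by simp
    then show ?thesis using arith2[OF r KI[OF y zz] vN[OF y] D5[OF y zz]] by simp
  qed
  have cb: "norm y \<le> h" if "y \<in> cball 0 h" for y using that by simp
  have P2: "\<phi> 0 = 0"
    using phi_uniq[of 0 0] z h by (simp add: F_def)
  have G0: "G 0 = 0" using P2 by (simp add: G_def)
  have P3: "g 0 = 0" using G0 nz by (simp add: g_def N_def)
  have lipN: "(6/r)-lipschitz_on (cball 0 h) N"
  proof (rule lipschitz_onI)
    fix y z :: "real^'m" assume y: "y \<in> cball 0 h" and zz: "z \<in> cball 0 h"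
    have "dist (N y) (N z) = norm (\<nu> (G y) - \<nu> (G z))" by (simp add: N_def dist_norm)
    also have "\<dots> \<le> norm (G y - G z) / r" using lip GF cb y zz F_def by blast
    also have "norm (G y - G z) = norm (join (y - z) (\<phi> y - \<phi> z))" by (simp add: G_def join_diff)
    also have "\<dots> \<le> norm (y - z) + abs (\<phi> y - \<phi> z)" by (rule norm_join_le)
    also have "abs (\<phi> y - \<phi> z) \<le> 5 * norm (y - z)" using D5[OF cb[OF zz] cb[OF y]] .
    finally show "dist (N y) (N z) \<le> 6 / r * dist y z" using r by (simp add: dist_norm divide_right_mono field_simps)
  qed (use r in simp)
  have cN: "continuous_on (cball 0 h) N" by (rule lipschitz_on_continuous_on[OF lipN])
  have cV: "continuous_on (cball 0 h) (\<lambda>y. vertical (N y))"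
    by (rule bounded_linear.continuous_on[OF bounded_linear_vertical cN])
  have cT: "continuous_on (cball 0 h) (\<lambda>y. tangential (N y))"
    by (rule bounded_linear.continuous_on[OF bounded_linear_tangential cN])
  have "continuous_on (cball 0 h) (\<lambda>y. - (1 / vertical (N y)) *\<^sub>R tangential (N y))"
    using vN cb by (intro continuous_intros cV cT) force
  then have P4: "continuous_on (cball 0 h) g" by (simp add: g_def)
  have P5: "(\<phi> has_derivative (\<lambda>v. g y \<bullet> v)) (at y within cball 0 h)" if y: "y \<in> cball 0 h" for y
    unfolding has_derivative_within_alt
  proof (intro conjI allI impI)
    show "bounded_linear (\<lambda>v. g y \<bullet> v)" by (rule bounded_linear_inner_right)
    fix e :: real assume e: "e > 0"
    show "\<exists>d>0. \<forall>z\<in>cball 0 h. norm (z - y) < d \<longrightarrow> norm (\<phi> z - \<phi> y - g y \<bullet> (z - y)) \<le> e * norm (z - y)"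
    proof (intro exI[of _ "e * r / 26"] conjI ballI impI)
      show "0 < e * r / 26" using e r by simp
      fix z :: "real^'m" assume zz: "z \<in> cball 0 h" and d: "norm (z - y) < e * r / 26"
      have "norm (z - y) * norm (z - y) \<le> norm (z - y) * (e * r / 26)"
        using d by (intro mult_left_mono) auto
      then have "26 * (norm (z - y))\<^sup>2 / r \<le> e * norm (z - y)"
        using r by (simp add: power2_eq_square field_simps)
      then show "norm (\<phi> z - \<phi> y - g y \<bullet> (z - y)) \<le> e * norm (z - y)"
        using Derr[OF cb[OF y] cb[OF zz]] by simp
    qed
  qed
  define C where "C = {x::real^('m option). norm (tangential x) < h \<and> \<bar>vertical x\<bar> < h}"
  have P6: "(x \<in> U \<longleftrightarrow> vertical x < \<phi> (tangential x)) \<and> (x \<in> frontier U \<longleftrightarrow> vertical x = \<phi> (tangential x))"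
    if x: "x \<in> C" for x
  proof -
    define y where "y = tangential x"
    define t where "t = vertical x"
    have y: "norm y \<le> h" using x by (simp add: C_def y_def)
    have t: "abs t < h" using x by (simp add: C_def t_def)
    have xe: "x = G y + (t - \<phi> y) *\<^sub>R eN"
      using jshift[of y t "\<phi> y"] by (simp add: G_def y_def t_def)
    have ph: "abs (\<phi> y) < h" using phi[OF y] by simp
    consider "t < \<phi> y" | "t > \<phi> y" | "t = \<phi> y" by linarith
    then show ?thesis
    proof cases
      case 1
      have "x = G y - (\<phi> y - t) *\<^sub>R eN" using xe by (simp add: algebra_simps)
      then have "x \<in> U \<and> x \<notin> F" using below[OF GF[OF y] nG[OF y], of "\<phi> y - t"] 1 t ph h by auto
      then show ?thesis using 1 by (simp add: F_def y_def t_def)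
    next
      case 2
      have "x \<notin> U \<and> x \<notin> F" using above[OF GF[OF y] nG[OF y], of "t - \<phi> y"] xe 2 t ph h by auto
      then show ?thesis using 2 by (simp add: F_def y_def t_def)
    next
      case 3
      have "x \<in> F" using xe 3 GF[OF y] by simp
      then show ?thesis using 3 FnU by (auto simp: F_def y_def t_def)
    qed
  qed
  have P7: "\<nu> (join y (\<phi> y)) = (1 / sqrt ((norm (g y))\<^sup>2 + 1)) *\<^sub>R join (- g y) 1"
    if y: "y \<in> ball 0 h" for y
  proof -
    have y': "norm y \<le> h" using y by simp
    define T where "T = tangential (N y)"
    define c where "c = vertical (N y)"
    have c: "c \<ge> 1/2" using vN[OF y'] by (simp add: c_def)
    have TV: "(norm T)\<^sup>2 + c\<^sup>2 = 1" using norm_split[of "N y"] N1[OF y'] by (simp add: T_def c_def)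
    have gy: "g y = - (1/c) *\<^sub>R T" by (simp add: g_def T_def c_def)
    have "(norm (g y))\<^sup>2 = (norm T)\<^sup>2 / c\<^sup>2" using c by (simp add: gy power2_eq_square field_simps)
    then have "(norm (g y))\<^sup>2 + 1 = ((norm T)\<^sup>2 + c\<^sup>2) / c\<^sup>2" using c by (simp add: field_simps)
    then have "(norm (g y))\<^sup>2 + 1 = (1/c)\<^sup>2" using TV by (simp add: power_divide)
    then have sq: "sqrt ((norm (g y))\<^sup>2 + 1) = 1/c" using c by simp
    have "(1 / sqrt ((norm (g y))\<^sup>2 + 1)) *\<^sub>R join (- g y) 1 = c *\<^sub>R join ((1/c) *\<^sub>R T) 1"
      using sq by (simp add: gy)
    also have "\<dots> = join T c" using c by (simp add: join_scaleR)
    also have "\<dots> = N y" by (simp add: T_def c_def)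
    finally show ?thesis by (simp add: N_def G_def)
  qed
  show ?thesis
    unfolding h_def[symmetric]
  proof (intro exI[of _ \<phi>] exI[of _ g] conjI)
    show "\<forall>y\<in>cball 0 h. \<phi> y \<in> {- h<..<h}"
    proof
      fix y :: "real^'m" assume "y \<in> cball 0 h"
      then have "abs (\<phi> y) < h" using phi cb by blast
      then show "\<phi> y \<in> {- h<..<h}" by (simp add: abs_less_iff)
    qed
    show "\<phi> 0 = 0" by (rule P2)
    show "g 0 = 0" by (rule P3)
    show "continuous_on (cball 0 h) g" by (rule P4)
    show "\<forall>y\<in>cball 0 h. (\<phi> has_derivative (\<lambda>v. g y \<bullet> v)) (at y within cball 0 h)" using P5 by blast
    show "{x. norm (tangential x) < h \<and> \<bar>vertical x\<bar> < h} \<inter> U =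
      {x \<in> {x. norm (tangential x) < h \<and> \<bar>vertical x\<bar> < h}. vertical x < \<phi> (tangential x)}"
      using P6 unfolding C_def by blast
    show "{x. norm (tangential x) < h \<and> \<bar>vertical x\<bar> < h} \<inter> frontier U =
      {x \<in> {x. norm (tangential x) < h \<and> \<bar>vertical x\<bar> < h}. vertical x = \<phi> (tangential x)}"
      using P6 unfolding C_def by blast
    show "\<forall>y\<in>ball 0 h. \<nu> (join y (\<phi> y)) = (1 / sqrt ((norm (g y))\<^sup>2 + 1)) *\<^sub>R join (- g y) 1"
      using P7 by blast
  qed
qed


lemma card_option_ge2: "2 \<le> CARD('m::finite option)"
proof -
  have "CARD('m option) = card (insert None (range (Some :: 'm \<Rightarrow> 'm option)))"
    by (simp add: UNIV_option_conv)
  also have "\<dots> = Suc (card (range (Some :: 'm \<Rightarrow> 'm option)))"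
    by (subst card_insert_disjoint) auto
  also have "card (range (Some :: 'm \<Rightarrow> 'm option)) = CARD('m)"
    by (simp add: card_image)
  finally show ?thesis using finite_UNIV_card_ge_0[where 'a='m] by simp
qed

lemma isometry_closure:
  fixes f :: "'a::metric_space \<Rightarrow> 'b::metric_space"
  assumes iso: "\<And>x y. dist (f x) (f y) = dist x y" and su: "surj f"
  shows "closure (f ` S) = f ` closure S"
proof
  show "closure (f ` S) \<subseteq> f ` closure S"
  proof
    fix z assume z: "z \<in> closure (f ` S)"
    obtain x where x: "z = f x" using su by (metis surjD)
    have "x \<in> closure S" unfolding closure_approachable
    proof (intro allI impI)
      fix e :: real assume "e > 0"
      then obtain w where "w \<in> f ` S" "dist w z < e" using z unfolding closure_approachable by blast
      then show "\<exists>y\<in>S. dist y x < e" using iso x by auto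
    qed
    then show "z \<in> f ` closure S" using x by blast
  qed
  show "f ` closure S \<subseteq> closure (f ` S)"
  proof
    fix z assume "z \<in> f ` closure S"
    then obtain x where x: "z = f x" "x \<in> closure S" by blast
    show "z \<in> closure (f ` S)" unfolding closure_approachable
    proof (intro allI impI)
      fix e :: real assume "e > 0"
      then obtain y where "y \<in> S" "dist y x < e" using x unfolding closure_approachable by blast
      then show "\<exists>w\<in>f ` S. dist w z < e" using iso x by (intro bexI[of _ "f y"]) auto
    qed
  qed
qed

lemma isometry_inj:
  fixes f :: "'a::metric_space \<Rightarrow> 'b::metric_space"
  assumes iso: "\<And>x y. dist (f x) (f y) = dist x y"
  shows "inj f"
  by (rule injI) (metis iso dist_eq_0_iff)

lemma isometry_frontier:
  fixes f :: "'a::metric_space \<Rightarrow> 'b::metric_space"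
  assumes iso: "\<And>x y. dist (f x) (f y) = dist x y" and su: "surj f"
  shows "frontier (f ` S) = f ` frontier S"
proof -
  have b: "bij f" using isometry_inj[OF iso] su by (simp add: bij_def)
  have "frontier (f ` S) = closure (f ` S) \<inter> closure (- (f ` S))" by (simp add: frontier_closures)
  also have "- (f ` S) = f ` (- S)" using bij_image_Compl_eq[OF b] by simp
  also have "closure (f ` S) \<inter> closure (f ` (- S)) = f ` closure S \<inter> f ` closure (- S)"
    using isometry_closure[OF iso su] by simp
  also have "\<dots> = f ` (closure S \<inter> closure (- S))" using isometry_inj[OF iso] by (simp add: image_Int)
  finally show ?thesis by (simp add: frontier_closures)
qed

locale rigid =
  fixes A :: "real^('m::finite option)^('m option)" and c :: "real^('m option)"
  assumes orth: "orthogonal_matrix A"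
begin

definition T where "T x = A *v x + c"
definition Ti where "Ti q = transpose A *v (q - c)"

lemma T_Ti[simp]: "T (Ti q) = q"
  unfolding T_def Ti_def orth_inv_right[OF orth] by simp

lemma Ti_T[simp]: "Ti (T x) = x"
  unfolding T_def Ti_def by (simp only: add_diff_cancel_right' orth_inv_left[OF orth])

lemma T_dist: "dist (T x) (T y) = dist x y"
  by (simp add: T_def dist_norm matrix_vector_mult_diff_distrib[symmetric] orth_norm[OF orth])

lemma Ti_diff: "Ti p - Ti q = transpose A *v (p - q)"
  by (simp add: Ti_def matrix_vector_mult_diff_distrib)

lemma normA: "norm (A *v x) = norm x"
  by (rule orth_norm[OF orth])

lemma normAt: "norm (transpose A *v x) = norm x"
  by (rule orth_norm) (simp add: orth)

lemma T_surj: "surj T"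
  by (metis T_Ti surjI)

lemma T_image: "T ` S = {q. Ti q \<in> S}"
  by (auto, metis T_Ti image_eqI)

lemma T_frontier: "frontier (T ` S) = T ` frontier S"
  by (rule isometry_frontier[OF T_dist T_surj])

lemma T_closure: "closure (T ` S) = T ` closure S"
  by (rule isometry_closure[OF T_dist T_surj])

lemma T_open: "open S \<Longrightarrow> open (T ` S)"
proof -
  assume o: "open S"
  have "T ` S = Ti -` S" using T_image by auto
  moreover have "continuous (at x) Ti" for x
    unfolding Ti_def
    by (rule isCont_o2[OF _ linear_continuous_at[OF matrix_vector_mul_bounded_linear]]) (intro continuous_intros)
  ultimately show ?thesis using continuous_open_vimage[OF o, of Ti] by simp
qed

lemma T_mem: "T x \<in> T ` S \<longleftrightarrow> x \<in> S"
  using T_image by auto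

end


lemma parallelogram:
  fixes p q :: "'a::real_inner"
  shows "(norm (p + q))\<^sup>2 + (norm (p - q))\<^sup>2 = 2 * (norm p)\<^sup>2 + 2 * (norm q)\<^sup>2"
  by (simp add: power2_norm_eq_inner inner_add_left inner_add_right inner_diff_left inner_diff_right inner_commute algebra_simps)

lemma center_eq:
  fixes a b x :: "'a::real_inner"
  assumes "dist x a = r" "dist x b = r" "2*r \<le> dist a b"
  shows "b = 2 *\<^sub>R x - a"
proof -
  define u where "u = a - x"
  define v where "v = x - b"
  have nu: "norm u = r" "norm v = r" using assms by (simp_all add: u_def v_def dist_norm norm_minus_commute)
  have "u + v = a - b" by (simp add: u_def v_def)
  then have "2*r \<le> norm (u + v)" using assms by (simp add: dist_norm)
  then have "(2*r)\<^sup>2 \<le> (norm (u + v))\<^sup>2" using nu by (intro power_mono) (auto intro: norm_ge_zero order_trans)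
  then have "(norm (u - v))\<^sup>2 \<le> 0" using parallelogram[of u v] nu by (simp add: power2_eq_square)
  then have "u = v" by simp
  then show ?thesis by (simp add: u_def v_def algebra_simps scaleR_2)
qed

lemma balls_far:
  fixes a b :: "'a::real_normed_vector"
  assumes "ball a r \<subseteq> S" "ball b r \<subseteq> - closure S"
  shows "2*r \<le> dist a b"
proof (rule ccontr)
  assume "\<not> 2*r \<le> dist a b"
  define m where "m = (1/2) *\<^sub>R (a + b)"
  have "a - m = (1/2) *\<^sub>R (a - b)" "b - m = (1/2) *\<^sub>R (b - a)"
    by (simp_all add: m_def algebra_simps flip: scaleR_add_left)
  then have "dist a m = dist a b / 2" "dist b m = dist a b / 2"
    by (simp_all add: dist_norm norm_minus_commute)
  then have "m \<in> ball a r" "m \<in> ball b r" using \<open>\<not> 2*r \<le> dist a b\<close> by auto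
  then show False using assms closure_subset by blast
qed

lemma lip_from_balls:
  fixes x y nx ny :: "'a::real_inner"
  assumes r: "r > 0" and n: "norm nx = 1" "norm ny = 1"
    and d1: "2*r \<le> norm ((x - r *\<^sub>R nx) - (y + r *\<^sub>R ny))"
    and d2: "2*r \<le> norm ((y - r *\<^sub>R ny) - (x + r *\<^sub>R nx))"
  shows "norm (nx - ny) \<le> norm (x - y) / r"
proof -
  define d where "d = x - y"
  define s where "s = nx + ny"
  define t where "t = nx - ny"
  have e1: "(x - r *\<^sub>R nx) - (y + r *\<^sub>R ny) = d - r *\<^sub>R s" by (simp add: d_def s_def algebra_simps)
  have e2: "(y - r *\<^sub>R ny) - (x + r *\<^sub>R nx) = - (d + r *\<^sub>R s)" by (simp add: d_def s_def algebra_simps)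
  have "(2*r)\<^sup>2 \<le> (norm (d - r *\<^sub>R s))\<^sup>2" using d1 e1 r by (intro power_mono) auto
  moreover have "norm (d + r *\<^sub>R s) = norm ((y - r *\<^sub>R ny) - (x + r *\<^sub>R nx))"
    by (simp only: e2 norm_minus_cancel)
  then have "(2*r)\<^sup>2 \<le> (norm (d + r *\<^sub>R s))\<^sup>2" using d2 r by (intro power_mono) auto
  moreover have "(norm (d + r *\<^sub>R s))\<^sup>2 + (norm (d - r *\<^sub>R s))\<^sup>2 = 2 * (norm d)\<^sup>2 + 2 * r\<^sup>2 * (norm s)\<^sup>2"
    using parallelogram[of d "r *\<^sub>R s"] r by (simp add: power_mult_distrib)
  moreover have "(norm s)\<^sup>2 + (norm t)\<^sup>2 = 4"
    using parallelogram[of nx ny] n by (simp add: s_def t_def)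
  moreover have "(2*r)\<^sup>2 = 4 * r\<^sup>2" by (simp add: power2_eq_square)
  ultimately have A: "8 * r\<^sup>2 \<le> 2 * (norm d)\<^sup>2 + 2 * r\<^sup>2 * (norm s)\<^sup>2" "(norm t)\<^sup>2 = 4 - (norm s)\<^sup>2" by linarith+
  then have "r\<^sup>2 * (norm t)\<^sup>2 = r\<^sup>2 * 4 - r\<^sup>2 * (norm s)\<^sup>2" by (simp add: right_diff_distrib)
  with A(1) have "r\<^sup>2 * (norm t)\<^sup>2 \<le> (norm d)\<^sup>2" by linarith
  then have "(r * norm t)\<^sup>2 \<le> (norm d)\<^sup>2" by (simp add: power_mult_distrib)
  then have "r * norm t \<le> norm d" by (rule power2_le_imp_le) simp
  then show ?thesis using r by (simp add: t_def d_def field_simps)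
qed


lemma (in rigid) Ti_shift:
  "norm (Ti z - (Ti q + s *\<^sub>R (transpose A *v v))) = norm (z - (q + s *\<^sub>R v))"
proof -
  have lin: "linear ((*v) (transpose A))" by simp
  have "Ti z - (Ti q + s *\<^sub>R (transpose A *v v)) = (Ti z - Ti q) - s *\<^sub>R (transpose A *v v)"
    by (simp add: algebra_simps)
  also have "\<dots> = transpose A *v (z - q) - transpose A *v (s *\<^sub>R v)"
    unfolding Ti_diff using linear_scale[OF lin] by metis
  also have "\<dots> = transpose A *v (z - (q + s *\<^sub>R v))"
    using linear_diff[OF lin, of "z - q" "s *\<^sub>R v"] by (simp add: algebra_simps)
  finally show ?thesis by (simp only: normAt)
qed

lemma chart_from_S:
  fixes \<Omega> :: "(real^('m::finite option)) set" and n :: "real^('m option) \<Rightarrow> real^('m option)"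
  assumes op: "open \<Omega>" and r: "r > 0" and x0: "x0 \<in> frontier \<Omega>"
    and ib: "\<And>x. x \<in> frontier \<Omega> \<Longrightarrow> ball (x - r *\<^sub>R n x) r \<subseteq> \<Omega>"
    and eb: "\<And>x. x \<in> frontier \<Omega> \<Longrightarrow> ball (x + r *\<^sub>R n x) r \<subseteq> - closure \<Omega>"
    and n1: "\<And>x. x \<in> frontier \<Omega> \<Longrightarrow> norm (n x) = 1"
    and lip: "\<And>x y. x \<in> frontier \<Omega> \<Longrightarrow> y \<in> frontier \<Omega> \<Longrightarrow> norm (n x - n y) \<le> norm (x - y) / r"
  shows "\<exists>\<rho> h A c \<phi> g. C1_chart \<Omega> x0 \<rho> h A c \<phi> g \<and>
     (\<forall>y\<in>ball 0 \<rho>.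
        n (matrix_inv A *v (join y (\<phi> y) - c)) =
          matrix_inv A *v ((1 / sqrt ((norm (g y))\<^sup>2 + 1)) *\<^sub>R join (- g y) 1))"
proof -
  have "norm (n x0) = norm (join 0 1 :: real^('m option))" using n1[OF x0] norm_eN by simp
  then obtain f where f: "orthogonal_transformation f" "det (matrix f) = 1" "f (n x0) = join 0 1"
    using rotation_exists[OF card_option_ge2] by metis
  define A where "A = matrix f"
  have lf: "linear f" using f(1) orthogonal_transformation_linear by blast
  have fA: "f x = A *v x" for x using matrix_vector_mul(2)[OF lf] by (metis A_def)
  have oA: "orthogonal_matrix A" using f(1) orthogonal_transformation_matrix A_def by blast
  define c where "c = - (A *v x0)"
  interpret rigid A c by unfold_locales (rule oA)
  define U where "U = T ` \<Omega>"
  define \<nu> where "\<nu> q = A *v n (Ti q)" for q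
  have frU: "frontier U = T ` frontier \<Omega>" by (simp add: U_def T_frontier)
  have clU: "closure U = T ` closure \<Omega>" by (simp add: U_def T_closure)
  have frU': "Ti q \<in> frontier \<Omega>" if "q \<in> frontier U" for q using that frU T_image by auto
  have nuT: "transpose A *v \<nu> q = n (Ti q)" for q unfolding \<nu>_def by (rule orth_inv_left[OF oA])
  have T0: "T x0 = 0" unfolding T_def unfolding c_def by simp
  have Ti0: "Ti 0 = x0" using Ti_T[of x0] T0 by simp
  have main: "\<exists>\<phi> g. (\<forall>y\<in>cball 0 (r/4). \<phi> y \<in> {-(r/4)<..<r/4}) \<and> \<phi> 0 = 0 \<and> g 0 = 0 \<and>
     continuous_on (cball 0 (r/4)) g \<and>
     (\<forall>y\<in>cball 0 (r/4). (\<phi> has_derivative (\<lambda>v. g y \<bullet> v)) (at y within cball 0 (r/4))) \<and>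
     {x. norm (tangential x) < r/4 \<and> \<bar>vertical x\<bar> < r/4} \<inter> U =
        {x\<in>{x. norm (tangential x) < r/4 \<and> \<bar>vertical x\<bar> < r/4}. vertical x < \<phi> (tangential x)} \<and>
     {x. norm (tangential x) < r/4 \<and> \<bar>vertical x\<bar> < r/4} \<inter> frontier U =
        {x\<in>{x. norm (tangential x) < r/4 \<and> \<bar>vertical x\<bar> < r/4}. vertical x = \<phi> (tangential x)} \<and>
     (\<forall>y\<in>ball 0 (r/4). \<nu> (join y (\<phi> y)) = (1 / sqrt ((norm (g y))\<^sup>2 + 1)) *\<^sub>R join (- g y) 1)"
  proof (rule normalized_S)
    show "open U" using op by (simp add: U_def T_open)
    show "r > 0" by (rule r)
    show "ball (q - r *\<^sub>R \<nu> q) r \<subseteq> U" if q: "q \<in> frontier U" for q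
    proof
      fix z assume "z \<in> ball (q - r *\<^sub>R \<nu> q) r"
      then have "norm (z - (q + (-r) *\<^sub>R \<nu> q)) < r" by (simp add: dist_norm norm_minus_commute)
      then have "norm (Ti z - (Ti q + (-r) *\<^sub>R (transpose A *v \<nu> q))) < r" by (simp only: Ti_shift)
      then have "norm (Ti z - (Ti q + (-r) *\<^sub>R n (Ti q))) < r" by (simp only: nuT)
      then have "Ti z \<in> ball (Ti q - r *\<^sub>R n (Ti q)) r" by (simp add: dist_norm norm_minus_commute)
      then have "Ti z \<in> \<Omega>" using ib[OF frU'[OF q]] by blast
      then show "z \<in> U" using T_image U_def by auto
    qed
    show "ball (q + r *\<^sub>R \<nu> q) r \<inter> closure U = {}" if q: "q \<in> frontier U" for q
    proof -
      have "z \<notin> closure U" if z: "z \<in> ball (q + r *\<^sub>R \<nu> q) r" for z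
      proof -
        from z have "norm (z - (q + r *\<^sub>R \<nu> q)) < r" by (simp add: dist_norm norm_minus_commute)
        then have "norm (Ti z - (Ti q + r *\<^sub>R (transpose A *v \<nu> q))) < r" by (simp only: Ti_shift)
        then have "norm (Ti z - (Ti q + r *\<^sub>R n (Ti q))) < r" by (simp only: nuT)
        then have "Ti z \<in> ball (Ti q + r *\<^sub>R n (Ti q)) r" by (simp add: dist_norm norm_minus_commute)
        then have "Ti z \<notin> closure \<Omega>" using eb[OF frU'[OF q]] by blast
        then show ?thesis using clU T_image by auto
      qed
      then show ?thesis by blast
    qed
    show "norm (\<nu> q) = 1" if "q \<in> frontier U" for q
      using n1[OF frU'[OF that]] by (simp add: \<nu>_def normA)
    show "norm (\<nu> p - \<nu> q) \<le> norm (p - q) / r" if "p \<in> frontier U" "q \<in> frontier U" for p q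
    proof -
      have "\<nu> p - \<nu> q = A *v (n (Ti p) - n (Ti q))" by (simp add: \<nu>_def matrix_vector_mult_diff_distrib)
      then have "norm (\<nu> p - \<nu> q) = norm (n (Ti p) - n (Ti q))" by (simp add: normA)
      also have "\<dots> \<le> norm (Ti p - Ti q) / r" using lip frU' that by blast
      also have "norm (Ti p - Ti q) = norm (p - q)" unfolding Ti_diff by (rule normAt)
      finally show ?thesis .
    qed
    show "0 \<in> frontier U" using frU x0 T0 by force
    show "\<nu> 0 = join 0 1" using f(3) fA by (simp add: \<nu>_def Ti0)
  qed
  then obtain \<phi> g where pg: "(\<forall>y\<in>cball 0 (r/4). \<phi> y \<in> {-(r/4)<..<r/4}) \<and> \<phi> 0 = 0 \<and> g 0 = 0 \<and>
     continuous_on (cball 0 (r/4)) g \<and>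
     (\<forall>y\<in>cball 0 (r/4). (\<phi> has_derivative (\<lambda>v. g y \<bullet> v)) (at y within cball 0 (r/4))) \<and>
     {x. norm (tangential x) < r/4 \<and> \<bar>vertical x\<bar> < r/4} \<inter> U =
        {x\<in>{x. norm (tangential x) < r/4 \<and> \<bar>vertical x\<bar> < r/4}. vertical x < \<phi> (tangential x)} \<and>
     {x. norm (tangential x) < r/4 \<and> \<bar>vertical x\<bar> < r/4} \<inter> frontier U =
        {x\<in>{x. norm (tangential x) < r/4 \<and> \<bar>vertical x\<bar> < r/4}. vertical x = \<phi> (tangential x)} \<and>
     (\<forall>y\<in>ball 0 (r/4). \<nu> (join y (\<phi> y)) = (1 / sqrt ((norm (g y))\<^sup>2 + 1)) *\<^sub>R join (- g y) 1)"
    by blast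
  have Tdef: "(\<lambda>x. A *v x + c) = T" by (simp add: T_def fun_eq_iff)
  have chart: "C1_chart \<Omega> x0 (r/4) (r/4) A c \<phi> g"
  proof -
    have detA: "det A = 1" using f(2) A_def by simp
    have Ax: "A *v x0 + c = 0" using T0 unfolding T_def .
    show ?thesis unfolding C1_chart_def Let_def Tdef
      using pg r oA detA Ax frU by (simp add: U_def[symmetric])
  qed
  have norm_f: "n (matrix_inv A *v (join y (\<phi> y) - c)) =
          matrix_inv A *v ((1 / sqrt ((norm (g y))\<^sup>2 + 1)) *\<^sub>R join (- g y) 1)" if "y \<in> ball 0 (r/4)" for y
  proof -
    have "n (matrix_inv A *v (join y (\<phi> y) - c)) = n (Ti (join y (\<phi> y)))"
      by (simp add: orth_matrix_inv[OF oA] Ti_def)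
    also have "\<dots> = transpose A *v \<nu> (join y (\<phi> y))" by (rule nuT[symmetric])
    also have "\<dots> = matrix_inv A *v ((1 / sqrt ((norm (g y))\<^sup>2 + 1)) *\<^sub>R join (- g y) 1)"
      using pg that by (simp add: orth_matrix_inv[OF oA])
    finally show ?thesis .
  qed
  show ?thesis using chart norm_f by blast
qed


lemma S_imp_L:
  fixes \<Omega> :: "(real^('m::finite option)) set"
  assumes op: "open \<Omega>" and r: "r > 0" and S: "cond_S r \<Omega>"
  shows "cond_L r \<Omega>"
proof -
  have "\<forall>x\<in>frontier \<Omega>. \<exists>ab. ball (fst ab) r \<subseteq> \<Omega> \<and> ball (snd ab) r \<subseteq> - closure \<Omega> \<and> dist x (fst ab) = r \<and> dist x (snd ab) = r"
    using S unfolding cond_S_def by force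
  then obtain ab where ab: "\<And>x. x \<in> frontier \<Omega> \<Longrightarrow> ball (fst (ab x)) r \<subseteq> \<Omega> \<and> ball (snd (ab x)) r \<subseteq> - closure \<Omega> \<and>
      dist x (fst (ab x)) = r \<and> dist x (snd (ab x)) = r"
    by metis
  define a where "a x = fst (ab x)" for x
  define b where "b x = snd (ab x)" for x
  define n where "n x = (1/r) *\<^sub>R (x - a x)" for x
  have ai: "ball (a x) r \<subseteq> \<Omega>" "ball (b x) r \<subseteq> - closure \<Omega>" "dist x (a x) = r" "dist x (b x) = r"
    if "x \<in> frontier \<Omega>" for x using ab[OF that] by (auto simp: a_def b_def)
  have far: "2*r \<le> dist (a x) (b y)" if "x \<in> frontier \<Omega>" "y \<in> frontier \<Omega>" for x y
    using balls_far[OF ai(1)[OF that(1)] ai(2)[OF that(2)]] .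
  have bx: "b x = 2 *\<^sub>R x - a x" if "x \<in> frontier \<Omega>" for x
    using center_eq[OF ai(3,4)[OF that] far[OF that that]] .
  have an: "a x = x - r *\<^sub>R n x" for x using r by (simp add: n_def)
  have bn: "b x = x + r *\<^sub>R n x" if "x \<in> frontier \<Omega>" for x
    using r bx[OF that] by (simp add: n_def algebra_simps scaleR_2)
  have n1: "norm (n x) = 1" if "x \<in> frontier \<Omega>" for x
    using ai(3)[OF that] r by (simp add: n_def dist_norm)
  have ib: "ball (x - r *\<^sub>R n x) r \<subseteq> \<Omega>" if "x \<in> frontier \<Omega>" for x using ai(1)[OF that] an by simp
  have eb: "ball (x + r *\<^sub>R n x) r \<subseteq> - closure \<Omega>" if "x \<in> frontier \<Omega>" for x using ai(2)[OF that] bn[OF that] by simp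
  have lip: "norm (n x - n y) \<le> norm (x - y) / r" if "x \<in> frontier \<Omega>" "y \<in> frontier \<Omega>" for x y
  proof (rule lip_from_balls[OF r n1[OF that(1)] n1[OF that(2)]])
    show "2 * r \<le> norm (x - r *\<^sub>R n x - (y + r *\<^sub>R n y))"
      using far[OF that] an[of x] bn[OF that(2)] by (simp add: dist_norm)
    show "2 * r \<le> norm (y - r *\<^sub>R n y - (x + r *\<^sub>R n x))"
      using far[OF that(2,1)] an[of y] bn[OF that(1)] by (simp add: dist_norm)
  qed
  have ch: "\<exists>\<rho> h A c \<phi> g. C1_chart \<Omega> x0 \<rho> h A c \<phi> g \<and>
     (\<forall>y\<in>ball 0 \<rho>.
        n (matrix_inv A *v (join y (\<phi> y) - c)) =
          matrix_inv A *v ((1 / sqrt ((norm (g y))\<^sup>2 + 1)) *\<^sub>R join (- g y) 1))"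
    if "x0 \<in> frontier \<Omega>" for x0
    by (rule chart_from_S[OF op r that ib eb n1 lip])
  have "C1_boundary \<Omega>" unfolding C1_boundary_def using ch by blast
  moreover have "outward_normal \<Omega> n" unfolding outward_normal_def using ch by blast
  ultimately show ?thesis unfolding cond_L_def using lip by (auto simp: field_simps)
qed


lemma ball_sq:
  fixes p x0 m0 :: "'a::real_inner"
  assumes "norm m0 = 1"
  shows "(norm (p - (x0 + s *\<^sub>R m0)))\<^sup>2 = (norm (p - x0))\<^sup>2 - 2 * s * ((p - x0) \<bullet> m0) + s\<^sup>2"
proof -
  define v where "v = p - x0"
  have "p - (x0 + s *\<^sub>R m0) = v - s *\<^sub>R m0" by (simp add: v_def)
  then have "(norm (p - (x0 + s *\<^sub>R m0)))\<^sup>2 = (v - s *\<^sub>R m0) \<bullet> (v - s *\<^sub>R m0)"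
    by (simp only: power2_norm_eq_inner)
  also have "\<dots> = v \<bullet> v - 2 * s * (v \<bullet> m0) + s\<^sup>2 * (m0 \<bullet> m0)"
    by (simp add: inner_diff_left inner_diff_right inner_commute power2_eq_square algebra_simps)
  also have "m0 \<bullet> m0 = 1" using assms power2_norm_eq_inner[of m0] by simp
  also have "v \<bullet> v = (norm v)\<^sup>2" by (simp add: power2_norm_eq_inner)
  finally show ?thesis by (simp add: v_def)
qed

lemma in_ball_iff:
  fixes p x0 m0 :: "'a::real_inner"
  assumes "norm m0 = 1" "s > 0"
  shows "p \<in> ball (x0 + s *\<^sub>R m0) s \<longleftrightarrow> (norm (p - x0))\<^sup>2 < 2 * s * ((p - x0) \<bullet> m0)"
proof -
  have "p \<in> ball (x0 + s *\<^sub>R m0) s \<longleftrightarrow> norm (p - (x0 + s *\<^sub>R m0)) < s"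
    by (simp add: dist_norm norm_minus_commute)
  also have "\<dots> \<longleftrightarrow> (norm (p - (x0 + s *\<^sub>R m0)))\<^sup>2 < s\<^sup>2"
    using assms by (metis abs_norm_cancel abs_of_pos power2_less_imp_less power_strict_mono norm_ge_zero zero_less_numeral pos2 less_imp_le)
  also have "\<dots> \<longleftrightarrow> (norm (p - x0))\<^sup>2 < 2 * s * ((p - x0) \<bullet> m0)"
    unfolding ball_sq[OF assms(1)] by linarith
  finally show ?thesis .
qed

lemma stepA:
  fixes U F :: "'a::euclidean_space set"
  assumes fr: "frontier U \<subseteq> F" and s: "s > 0"
    and H3: "\<exists>\<epsilon>>0. \<forall>t. 0 < t \<longrightarrow> t < \<epsilon> \<longrightarrow> x0 + t *\<^sub>R m0 \<in> U"
    and nm: "norm m0 = 1"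
    and dis: "ball (x0 + s *\<^sub>R m0) s \<inter> F = {}"
  shows "ball (x0 + s *\<^sub>R m0) s \<subseteq> U"
proof (rule ccontr)
  assume nsub: "\<not> ?thesis"
  obtain \<epsilon> where e: "\<epsilon> > 0" "\<And>t. 0 < t \<Longrightarrow> t < \<epsilon> \<Longrightarrow> x0 + t *\<^sub>R m0 \<in> U" using H3 by blast
  define t where "t = min (\<epsilon>/2) s"
  have t: "0 < t" "t < \<epsilon>" "t \<le> s" using e s by (auto simp: t_def)
  have "dist (x0 + s *\<^sub>R m0) (x0 + t *\<^sub>R m0) = norm ((s - t) *\<^sub>R m0)"
    by (simp add: dist_norm algebra_simps)
  also have "\<dots> = \<bar>s - t\<bar> * norm m0" by (rule norm_scaleR)
  also have "\<dots> = s - t" using nm t by simp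
  finally have "x0 + t *\<^sub>R m0 \<in> ball (x0 + s *\<^sub>R m0) s" using t nm by simp
  then have "ball (x0 + s *\<^sub>R m0) s \<inter> U \<noteq> {}" using e(2)[OF t(1,2)] by blast
  moreover have "ball (x0 + s *\<^sub>R m0) s - U \<noteq> {}" using nsub by blast
  ultimately have "ball (x0 + s *\<^sub>R m0) s \<inter> frontier U \<noteq> {}"
    by (intro connected_Int_frontier) auto
  then show False using fr dis by blast
qed


lemma global_ball:
  fixes U F :: "'a::euclidean_space set" and m :: "'a \<Rightarrow> 'a"
  assumes clF: "closed F" and fr: "frontier U \<subseteq> F" and r: "r > 0"
    and m1: "\<And>x. x \<in> F \<Longrightarrow> norm (m x) = 1"
    and lip: "\<And>x y. x \<in> F \<Longrightarrow> y \<in> F \<Longrightarrow> norm (m x - m y) \<le> norm (x - y) / r"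
    and H1: "\<And>x0 s. x0 \<in> F \<Longrightarrow> 0 < s \<Longrightarrow> s < r \<Longrightarrow>
              \<exists>\<delta>>0. \<forall>p\<in>F. norm (p - x0) < \<delta> \<longrightarrow> 2 * s * \<bar>(p - x0) \<bullet> m x0\<bar> \<le> (norm (p - x0))\<^sup>2"
    and H2: "\<And>y a d. y \<in> F \<Longrightarrow> 0 < d \<Longrightarrow> ball a d \<subseteq> U \<Longrightarrow> dist y a = d \<Longrightarrow> m y = (1/d) *\<^sub>R (a - y)"
    and H3: "\<And>x0. x0 \<in> F \<Longrightarrow> \<exists>\<epsilon>>0. \<forall>t. 0 < t \<longrightarrow> t < \<epsilon> \<longrightarrow> x0 + t *\<^sub>R m x0 \<in> U"
    and x0: "x0 \<in> F"
  shows "ball (x0 + r *\<^sub>R m x0) r \<subseteq> U"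
proof -
  define m0 where "m0 = m x0"
  have nm: "norm m0 = 1" using m1[OF x0] by (simp add: m0_def)
  have A: "ball (x0 + s *\<^sub>R m0) s \<subseteq> U" if "s > 0" "ball (x0 + s *\<^sub>R m0) s \<inter> F = {}" for s
    using stepA[OF fr that(1) _ nm that(2)] H3[OF x0] by (simp add: m0_def)
  define R where "R p = (norm (p - x0))\<^sup>2 / (2 * ((p - x0) \<bullet> m0))" for p
  have B: "ball (x0 + s0 *\<^sub>R m0) s0 \<inter> F = {}" if s0: "0 < s0" "s0 < r" for s0
  proof -
    obtain \<delta> where d: "\<delta> > 0" and dH: "\<And>p. p \<in> F \<Longrightarrow> norm (p - x0) < \<delta> \<Longrightarrow> 2 * s0 * \<bar>(p - x0) \<bullet> m0\<bar> \<le> (norm (p - x0))\<^sup>2"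
      using H1[OF x0 s0] by (auto simp: m0_def)
    have near: "p \<notin> ball (x0 + s *\<^sub>R m0) s" if "p \<in> F" "norm (p - x0) < \<delta>" "0 < s" "s \<le> s0" for p s
    proof
      assume "p \<in> ball (x0 + s *\<^sub>R m0) s"
      then have "(norm (p - x0))\<^sup>2 < 2 * s * ((p - x0) \<bullet> m0)" using in_ball_iff[OF nm that(3)] by blast
      moreover have "2 * s * ((p - x0) \<bullet> m0) \<le> 2 * s * \<bar>(p - x0) \<bullet> m0\<bar>"
        using that by (intro mult_left_mono) auto
      moreover have "2 * s * \<bar>(p - x0) \<bullet> m0\<bar> \<le> 2 * s0 * \<bar>(p - x0) \<bullet> m0\<bar>"
        using that by (intro mult_right_mono) auto
      ultimately show False using dH[OF that(1,2)] by linarith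
    qed
    define K where "K = F \<inter> cball (x0 + s0 *\<^sub>R m0) s0 - ball x0 \<delta>"
    have Kc: "compact K"
    proof -
      have "closed K" unfolding K_def using clF by (intro closed_Diff closed_Int) auto
      moreover have "bounded K" unfolding K_def by (rule bounded_subset[OF bounded_cball]) auto
      ultimately show ?thesis by (simp add: compact_eq_bounded_closed)
    qed
    have Kp: "(p - x0) \<bullet> m0 > 0 \<and> \<delta> \<le> norm (p - x0) \<and> p \<in> F" if "p \<in> K" for p
    proof -
      have p: "p \<in> F" "norm (p - (x0 + s0 *\<^sub>R m0)) \<le> s0" "\<delta> \<le> norm (p - x0)"
        using that by (auto simp: K_def dist_norm norm_minus_commute)
      have "(norm (p - (x0 + s0 *\<^sub>R m0)))\<^sup>2 \<le> s0\<^sup>2" using p(2) by (intro power_mono) auto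
      then have "(norm (p - x0))\<^sup>2 \<le> 2 * s0 * ((p - x0) \<bullet> m0)" unfolding ball_sq[OF nm] by simp
      moreover have "0 < (norm (p - x0))\<^sup>2" using p(3) d by (metis less_le_trans zero_less_power)
      ultimately have "0 < (2 * s0) * ((p - x0) \<bullet> m0)" by linarith
      then have "(p - x0) \<bullet> m0 > 0" using s0 by (simp add: zero_less_mult_iff)
      then show ?thesis using p by simp
    qed
    have inK: "p \<in> K \<and> R p < s0" if "p \<in> ball (x0 + s0 *\<^sub>R m0) s0" "p \<in> F" for p
    proof -
      have "\<not> norm (p - x0) < \<delta>" using near[OF that(2) _ s0(1)] that(1) by blast
      then have pK: "p \<in> K" using that by (auto simp: K_def dist_norm norm_minus_commute)
      have "(norm (p - x0))\<^sup>2 < 2 * s0 * ((p - x0) \<bullet> m0)" using in_ball_iff[OF nm s0(1)] that(1) by blast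
      then have "R p < s0" using Kp[OF pK] by (simp add: R_def field_simps)
      with pK show ?thesis by simp
    qed
    show ?thesis
    proof (cases "K = {}")
      case True
      then show ?thesis using inK by blast
    next
      case False
      have "continuous_on K R" unfolding R_def
        using Kp by (intro continuous_intros) force
      then obtain y where yK: "y \<in> K" and ymin: "\<And>p. p \<in> K \<Longrightarrow> R y \<le> R p"
        using continuous_attains_inf[OF Kc False] by blast
      show ?thesis
      proof (cases "s0 \<le> R y")
        case True
        then show ?thesis using inK ymin by fastforce
      next
        case False
        define s1 where "s1 = R y"
        have yp: "(y - x0) \<bullet> m0 > 0" "\<delta> \<le> norm (y - x0)" "y \<in> F" using Kp[OF yK] by auto
        have "0 < (norm (y - x0))\<^sup>2" using yp(2) d by (metis less_le_trans zero_less_power)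
        then have s1p: "s1 > 0" using yp by (simp add: s1_def R_def)
        have s1s0: "s1 < s0" using False by (simp add: s1_def)
        have D: "ball (x0 + s1 *\<^sub>R m0) s1 \<inter> F = {}"
        proof (rule ccontr)
          assume "\<not> ?thesis"
          then obtain p where p: "p \<in> ball (x0 + s1 *\<^sub>R m0) s1" "p \<in> F" by blast
          have lt: "(norm (p - x0))\<^sup>2 < 2 * s1 * ((p - x0) \<bullet> m0)" using in_ball_iff[OF nm s1p] p(1) by blast
          then have xp: "(p - x0) \<bullet> m0 > 0" using s1p
            by (smt (verit, best) mult_nonneg_nonpos zero_le_power2)
          have "\<not> norm (p - x0) < \<delta>" using near[OF p(2) _ s1p] p(1) s1s0 by force
          have "2 * s1 * ((p - x0) \<bullet> m0) < 2 * s0 * ((p - x0) \<bullet> m0)" using xp s1s0 by simp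
          then have "p \<in> ball (x0 + s0 *\<^sub>R m0) s0" using lt in_ball_iff[OF nm s0(1)] by simp
          then have "p \<in> K" using inK p(2) by blast
          moreover have "R p < s1" using lt xp by (simp add: R_def field_simps)
          ultimately show False using ymin s1_def by fastforce
        qed
        have Usub: "ball (x0 + s1 *\<^sub>R m0) s1 \<subseteq> U" by (rule A[OF s1p D])
        have eq: "(norm (y - x0))\<^sup>2 = 2 * s1 * ((y - x0) \<bullet> m0)" using yp by (simp add: s1_def R_def)
        have "(norm (y - (x0 + s1 *\<^sub>R m0)))\<^sup>2 = s1\<^sup>2" unfolding ball_sq[OF nm] eq by simp
        then have "norm (y - (x0 + s1 *\<^sub>R m0)) = s1" using s1p
          by (metis abs_of_pos norm_ge_zero power2_eq_imp_eq less_imp_le)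
        then have dy: "dist y (x0 + s1 *\<^sub>R m0) = s1" by (simp add: dist_norm)
        have my: "m y = (1/s1) *\<^sub>R ((x0 + s1 *\<^sub>R m0) - y)" by (rule H2[OF yp(3) s1p Usub dy])
        have "m x0 - m y = (1/s1) *\<^sub>R (y - x0)" using s1p by (simp add: my m0_def algebra_simps)
        then have "norm (m x0 - m y) = norm (y - x0) / s1" using s1p by simp
        then have "norm (y - x0) / s1 \<le> norm (y - x0) / r" using lip[OF x0 yp(3)] by (simp add: norm_minus_commute)
        moreover have "norm (y - x0) > 0" using yp(2) d by linarith
        ultimately have "r \<le> s1" using s1p r by (simp add: divide_le_cancel frac_le_eq field_simps)
        then show ?thesis using s1s0 s0 by simp
      qed
    qed
  qed
  show ?thesis
  proof
    fix q assume q: "q \<in> ball (x0 + r *\<^sub>R m x0) r"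
    define e where "e = r - norm (q - (x0 + r *\<^sub>R m0))"
    have e: "0 < e" "e \<le> r" using q by (auto simp: e_def m0_def dist_norm norm_minus_commute)
    define s where "s = r - e/3"
    have s: "0 < s" "s < r" using e by (auto simp: s_def)
    have "norm (q - (x0 + s *\<^sub>R m0)) \<le> norm (q - (x0 + r *\<^sub>R m0)) + norm ((r - s) *\<^sub>R m0)"
      by (rule order_trans[OF _ norm_triangle_ineq]) (simp add: algebra_simps)
    also have "\<dots> = (r - e) + e/3" using nm e by (simp add: e_def s_def)
    finally have "q \<in> ball (x0 + s *\<^sub>R m0) s" using e by (simp add: s_def dist_norm norm_minus_commute)
    then show "q \<in> U" using A[OF s(1) B[OF s]] by blast
  qed
qed


lemma phi_small:
  fixes \<phi> :: "real^'m::finite \<Rightarrow> real"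
  assumes rho: "\<rho> > 0" and p0: "\<phi> 0 = 0" and g0: "g 0 = 0"
    and der: "(\<phi> has_derivative (\<lambda>v. g 0 \<bullet> v)) (at 0 within cball 0 \<rho>)"
    and eta: "\<eta> > 0"
  shows "\<exists>\<delta>>0. \<forall>z. norm z < \<delta> \<longrightarrow> \<bar>\<phi> z\<bar> \<le> \<eta> * norm z"
proof -
  obtain d where d: "d > 0" "\<And>y. y \<in> cball 0 \<rho> \<Longrightarrow> norm (y - 0) < d \<Longrightarrow> norm (\<phi> y - \<phi> 0 - g 0 \<bullet> (y - 0)) \<le> \<eta> * norm (y - 0)"
    using der eta unfolding has_derivative_within_alt by blast
  show ?thesis
  proof (intro exI[of _ "min d \<rho>"] conjI allI impI)
    show "0 < min d \<rho>" using d rho by simp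
    fix z :: "real^'m" assume "norm z < min d \<rho>"
    then show "\<bar>\<phi> z\<bar> \<le> \<eta> * norm z" using d(2)[of z] p0 g0 by simp
  qed
qed

lemma sqrt_sq1_le: "x \<ge> 0 \<Longrightarrow> sqrt (x\<^sup>2 + 1) \<le> 1 + (x::real)"
proof -
  assume x: "x \<ge> 0"
  have "sqrt (x\<^sup>2 + 1) \<le> sqrt ((1 + x)\<^sup>2)" using x by (intro real_sqrt_le_mono) (simp add: power2_eq_square algebra_simps)
  also have "\<dots> = 1 + x" using x by simp
  finally show ?thesis .
qed

lemma phi_quad:
  fixes \<phi> :: "real^'m::finite \<Rightarrow> real" and g :: "real^'m \<Rightarrow> real^'m"
  assumes rho: "\<rho> > 0" and r: "r > 0" and p0: "\<phi> 0 = 0" and g0: "g 0 = 0"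
    and cg: "continuous_on (cball 0 \<rho>) g"
    and der: "\<And>y. y \<in> cball 0 \<rho> \<Longrightarrow> (\<phi> has_derivative (\<lambda>v. g y \<bullet> v)) (at y within cball 0 \<rho>)"
    and lipn: "\<And>y. y \<in> ball 0 \<rho> \<Longrightarrow>
       norm ((1 / sqrt ((norm (g y))\<^sup>2 + 1)) *\<^sub>R join (- g y) 1 - join 0 1) \<le> norm (join y (\<phi> y)) / r"
    and eps: "\<epsilon> > 0"
  shows "\<exists>\<delta>>0. \<forall>z. norm z < \<delta> \<longrightarrow> 2 * r * \<bar>\<phi> z\<bar> \<le> (1 + \<epsilon>) * (norm z)\<^sup>2"
proof -
  define \<eta> where "\<eta> = min 1 (\<epsilon>/3)"
  have eta: "\<eta> > 0" "\<eta> \<le> 1" "3 * \<eta> \<le> \<epsilon>" using eps by (auto simp: \<eta>_def)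
  have eta2: "(1 + \<eta>) * (1 + \<eta>) \<le> 1 + \<epsilon>"
  proof -
    have "\<eta> * \<eta> \<le> \<eta> * 1" using eta by (intro mult_left_mono) auto
    moreover have "(1 + \<eta>) * (1 + \<eta>) = 1 + 2 * \<eta> + \<eta> * \<eta>" by (simp add: algebra_simps)
    ultimately show ?thesis using eta by linarith
  qed
  have gb: "norm (g w) \<le> (1 + \<epsilon>) * norm w / r"
    if w: "w \<in> ball 0 \<rho>" and pw: "\<bar>\<phi> w\<bar> \<le> \<eta> * norm w" and gw: "norm (g w) \<le> \<eta>" for w
  proof -
    define k where "k = 1 / sqrt ((norm (g w))\<^sup>2 + 1)"
    have sp: "sqrt ((norm (g w))\<^sup>2 + 1) > 0" by (simp add: add_nonneg_pos)
    have k: "k > 0" using sp by (simp add: k_def)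
    have "(1 / sqrt ((norm (g w))\<^sup>2 + 1)) *\<^sub>R join (- g w) 1 - join 0 1 = join (- (k *\<^sub>R g w)) (k - 1)"
      by (simp add: k_def join_scaleR join_diff)
    then have "norm (join (- (k *\<^sub>R g w)) (k - 1)) \<le> norm (join w (\<phi> w)) / r" using lipn[OF w] by simp
    moreover have "norm (k *\<^sub>R g w) \<le> norm (join (- (k *\<^sub>R g w)) (k - 1))"
      using norm_tangential_le[of "join (- (k *\<^sub>R g w)) (k - 1)"] by simp
    moreover have "norm (join w (\<phi> w)) \<le> (1 + \<eta>) * norm w"
      using norm_join_le[of w "\<phi> w"] pw by (simp add: algebra_simps)
    ultimately have "k * norm (g w) \<le> (1 + \<eta>) * norm w / r" using k r
      by (smt (verit, best) divide_right_mono norm_scaleR)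
    then have "norm (g w) \<le> (1 + \<eta>) * norm w / r * sqrt ((norm (g w))\<^sup>2 + 1)"
      using sp by (simp add: k_def field_simps)
    also have "\<dots> \<le> (1 + \<eta>) * norm w / r * (1 + \<eta>)"
      using sqrt_sq1_le[of "norm (g w)"] gw eta r by (intro mult_left_mono) auto
    also have "\<dots> = ((1 + \<eta>) * (1 + \<eta>)) * norm w / r" by simp
    also have "\<dots> \<le> (1 + \<epsilon>) * norm w / r" using eta2 r by (intro divide_right_mono mult_right_mono) auto
    finally show ?thesis .
  qed
  obtain \<delta>1 where d1: "\<delta>1 > 0" "\<And>z. norm z < \<delta>1 \<Longrightarrow> \<bar>\<phi> z\<bar> \<le> \<eta> * norm z"
  proof -
    have c0: "(0::real^'m) \<in> cball 0 \<rho>" using rho by simp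
    show ?thesis using phi_small[of \<rho> \<phi> g \<eta>, OF rho p0 g0 der[OF c0] eta(1)] that by auto
  qed
  obtain \<delta>2 where d2: "\<delta>2 > 0" "\<And>z. z \<in> cball 0 \<rho> \<Longrightarrow> dist z 0 < \<delta>2 \<Longrightarrow> dist (g z) (g 0) < \<eta>"
    using cg eta(1) rho unfolding continuous_on_iff by (metis centre_in_cball less_imp_le)
  define \<delta> where "\<delta> = min \<rho> (min \<delta>1 \<delta>2)"
  have gsmall: "norm (g w) \<le> (1 + \<epsilon>) * norm w / r" if "norm w < \<delta>" for w
  proof (rule gb)
    show "w \<in> ball 0 \<rho>" using that by (simp add: \<delta>_def)
    show "\<bar>\<phi> w\<bar> \<le> \<eta> * norm w" using d1(2)[of w] that by (simp add: \<delta>_def)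
    show "norm (g w) \<le> \<eta>" using d2(2)[of w] that g0 by (simp add: \<delta>_def dist_norm)
  qed
  show ?thesis
  proof (intro exI[of _ \<delta>] conjI allI impI)
    show "\<delta> > 0" using rho d1 d2 by (simp add: \<delta>_def)
    fix z :: "real^'m" assume z: "norm z < \<delta>"
    define K where "K = (1 + \<epsilon>) * (norm z)\<^sup>2 / (2 * r)"
    have dphi: "((\<lambda>t. \<phi> (t *\<^sub>R z)) has_real_derivative (g (t *\<^sub>R z) \<bullet> z)) (at t)"
      if t: "0 \<le> t" "t \<le> 1" for t
    proof -
      have tz: "norm (t *\<^sub>R z) < \<delta>"
      proof -
        have "norm (t *\<^sub>R z) = t * norm z" using t by simp
        also have "\<dots> \<le> 1 * norm z" using t by (intro mult_right_mono) auto
        finally show ?thesis using z by simp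
      qed
      then have tzb: "t *\<^sub>R z \<in> ball 0 \<rho>" by (simp add: \<delta>_def)
      have d2: "(\<phi> has_derivative (\<lambda>v. g (t *\<^sub>R z) \<bullet> v)) (at (t *\<^sub>R z))"
        using der[of "t *\<^sub>R z"] tzb at_within_interior[of "t *\<^sub>R z" "cball 0 \<rho>"] by simp
      have d1: "((\<lambda>s. s *\<^sub>R z) has_derivative (\<lambda>s. s *\<^sub>R z)) (at t)"
        by (intro derivative_eq_intros) auto
      have "((\<lambda>s. \<phi> (s *\<^sub>R z)) has_derivative (\<lambda>s. g (t *\<^sub>R z) \<bullet> (s *\<^sub>R z))) (at t)"
        using has_derivative_compose[OF d1 d2] .
      then show ?thesis by (rule has_derivative_imp_has_field_derivative) (simp add: mult.commute)
    qed
    have gz: "\<bar>g (t *\<^sub>R z) \<bullet> z\<bar> \<le> 2 * K * t" if t: "0 \<le> t" "t \<le> 1" for t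
    proof -
      have tz: "norm (t *\<^sub>R z) < \<delta>"
      proof -
        have "norm (t *\<^sub>R z) = t * norm z" using t by simp
        also have "\<dots> \<le> 1 * norm z" using t by (intro mult_right_mono) auto
        finally show ?thesis using z by simp
      qed
      have "\<bar>g (t *\<^sub>R z) \<bullet> z\<bar> \<le> norm (g (t *\<^sub>R z)) * norm z" by (rule Cauchy_Schwarz_ineq2)
      also have "\<dots> \<le> ((1 + \<epsilon>) * norm (t *\<^sub>R z) / r) * norm z"
        using gsmall[OF tz] by (intro mult_right_mono) auto
      also have "\<dots> = 2 * K * t" using t r by (simp add: K_def power2_eq_square field_simps)
      finally show ?thesis .
    qed
    have mono1: "(\<lambda>t. \<phi> (t *\<^sub>R z) + K * t\<^sup>2) 0 \<le> (\<lambda>t. \<phi> (t *\<^sub>R z) + K * t\<^sup>2) 1"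
    proof (rule DERIV_nonneg_imp_nondecreasing[of 0 1])
      fix t :: real assume t: "0 \<le> t" "t \<le> 1"
      have "((\<lambda>t. \<phi> (t *\<^sub>R z) + K * t\<^sup>2) has_real_derivative (g (t *\<^sub>R z) \<bullet> z + K * (2 * t))) (at t)"
        using dphi[OF t] by (intro derivative_eq_intros) auto
      moreover have "g (t *\<^sub>R z) \<bullet> z + K * (2 * t) \<ge> 0" using gz[OF t] by (simp add: abs_le_iff algebra_simps)
      ultimately show "\<exists>y. ((\<lambda>t. \<phi> (t *\<^sub>R z) + K * t\<^sup>2) has_real_derivative y) (at t) \<and> 0 \<le> y" by blast
    qed simp
    have mono2: "(\<lambda>t. - \<phi> (t *\<^sub>R z) + K * t\<^sup>2) 0 \<le> (\<lambda>t. - \<phi> (t *\<^sub>R z) + K * t\<^sup>2) 1"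
    proof (rule DERIV_nonneg_imp_nondecreasing[of 0 1])
      fix t :: real assume t: "0 \<le> t" "t \<le> 1"
      have "((\<lambda>t. - \<phi> (t *\<^sub>R z) + K * t\<^sup>2) has_real_derivative (- (g (t *\<^sub>R z) \<bullet> z) + K * (2 * t))) (at t)"
        using dphi[OF t] by (intro derivative_eq_intros) auto
      moreover have "- (g (t *\<^sub>R z) \<bullet> z) + K * (2 * t) \<ge> 0" using gz[OF t] by (simp add: abs_le_iff algebra_simps)
      ultimately show "\<exists>y. ((\<lambda>t. - \<phi> (t *\<^sub>R z) + K * t\<^sup>2) has_real_derivative y) (at t) \<and> 0 \<le> y" by blast
    qed simp
    have "\<bar>\<phi> z\<bar> \<le> K" using mono1 mono2 p0 by (simp add: abs_le_iff)
    then show "2 * r * \<bar>\<phi> z\<bar> \<le> (1 + \<epsilon>) * (norm z)\<^sup>2" using r by (simp add: K_def field_simps)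
  qed
qed


lemma tangent_ball:
  fixes \<phi> :: "real^'m::finite \<Rightarrow> real" and u :: "real^('m option)"
  assumes sg: "\<sigma> = 1 \<or> \<sigma> = -1" and u: "norm u = 1" and d: "d > 0" and rho: "\<rho> > 0" and h: "h > 0"
    and small: "\<And>\<eta>. \<eta> > 0 \<Longrightarrow> \<exists>\<delta>>0. \<forall>z. norm z < \<delta> \<longrightarrow> \<bar>\<phi> z\<bar> \<le> \<eta> * norm z"
    and side: "\<And>q. norm (q - d *\<^sub>R u) < d \<Longrightarrow> norm (tangential q) < \<rho> \<Longrightarrow> \<bar>vertical q\<bar> < h \<Longrightarrow>
                  \<sigma> * (vertical q - \<phi> (tangential q)) < 0"
  shows "u = (- \<sigma>) *\<^sub>R join 0 1"
proof (rule ccontr)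
  assume ne: "u \<noteq> (- \<sigma>) *\<^sub>R join 0 1"
  have ss: "\<sigma> * \<sigma> = 1" using sg by auto
  have sa: "\<bar>\<sigma>\<bar> = 1" using sg by auto
  define \<kappa> where "\<kappa> = 1 + \<sigma> * vertical u"
  have TV: "(norm (tangential u))\<^sup>2 + (vertical u)\<^sup>2 = 1" using norm_split[of u] u by simp
  have vu: "\<bar>vertical u\<bar> \<le> 1" using abs_vertical_le[of u] u by simp
  have tu: "norm (tangential u) \<le> 1" using norm_tangential_le[of u] u by simp
  have kpos: "\<kappa> > 0"
  proof (rule ccontr)
    assume "\<not> \<kappa> > 0"
    moreover have "\<bar>\<sigma> * vertical u\<bar> \<le> 1" using vu sa by (simp add: abs_mult)
    ultimately have "\<sigma> * vertical u = -1" unfolding \<kappa>_def by linarith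
    then have v: "vertical u = - \<sigma>" using sg by auto
    then have "(vertical u)\<^sup>2 = 1" using ss by (simp add: power2_eq_square)
    then have "tangential u = 0" using TV by simp
    then have "u = join 0 (- \<sigma>)" using v by (simp add: eq_join_iff)
    then have "u = (- \<sigma>) *\<^sub>R join 0 1" by (simp only: join_scaleR) simp
    then show False using ne by simp
  qed
  define w where "w = u + \<sigma> *\<^sub>R join 0 1"
  have wt: "tangential w = tangential u" and wv: "vertical w = vertical u + \<sigma>" by (simp_all add: w_def)
  have swv: "\<sigma> * vertical w = \<kappa>" using ss by (simp add: wv \<kappa>_def algebra_simps)
  have uw: "w \<bullet> u = \<kappa>"
  proof -
    have "w \<bullet> u = u \<bullet> u + \<sigma> * (join 0 1 \<bullet> u)" by (simp add: w_def inner_add_left)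
    also have "u \<bullet> u = 1" using u power2_norm_eq_inner[of u] by simp
    also have "join 0 1 \<bullet> u = vertical u" by (simp add: inner_join)
    finally show ?thesis by (simp add: \<kappa>_def)
  qed
  have nw: "norm w \<le> 2" using u norm_triangle_ineq[of u "\<sigma> *\<^sub>R join 0 1"] sa norm_eN[where 'a='m] by (simp add: w_def)
  obtain \<delta> where dl: "\<delta> > 0" "\<And>z. norm z < \<delta> \<Longrightarrow> \<bar>\<phi> z\<bar> \<le> (\<kappa>/2) * norm z"
    using small[of "\<kappa>/2"] kpos by auto
  define t where "t = min (\<delta>/2) (min (\<rho>/4) (min (h/4) (d * \<kappa> / 4)))"
  have dk: "d * \<kappa> > 0" using d kpos by simp
  have t1: "t \<le> \<delta>/2" "t \<le> \<rho>/4" "t \<le> h/4" "t \<le> d * \<kappa> / 4" by (simp_all add: t_def)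
  have t0: "t > 0" using dl rho h dk by (simp add: t_def)
  have t: "t > 0" "t < \<delta>" "2 * t < \<rho>" "2 * t < h" "4 * t < 2 * d * \<kappa>"
    using t0 t1 dl rho h dk by linarith+
  define q where "q = t *\<^sub>R w"
  have "(norm (q - d *\<^sub>R u))\<^sup>2 = t\<^sup>2 * (norm w)\<^sup>2 - 2 * t * d * \<kappa> + d\<^sup>2"
  proof -
    have "(norm (q - d *\<^sub>R u))\<^sup>2 = (t *\<^sub>R w - d *\<^sub>R u) \<bullet> (t *\<^sub>R w - d *\<^sub>R u)"
      by (simp add: q_def power2_norm_eq_inner)
    also have "\<dots> = t\<^sup>2 * (w \<bullet> w) - 2 * t * d * (w \<bullet> u) + d\<^sup>2 * (u \<bullet> u)"
      by (simp add: inner_diff_left inner_diff_right inner_commute power2_eq_square algebra_simps)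
    also have "u \<bullet> u = 1" using u power2_norm_eq_inner[of u] by simp
    finally show ?thesis by (simp add: uw power2_norm_eq_inner)
  qed
  moreover have "t\<^sup>2 * (norm w)\<^sup>2 < 2 * t * d * \<kappa>"
  proof -
    have "(norm w)\<^sup>2 \<le> 4" using nw by (metis norm_ge_zero power_mono numeral_Bit0 numeral_One one_add_one power2_eq_square mult_2 num_double power2_eq_square)
    then have "t\<^sup>2 * (norm w)\<^sup>2 \<le> t\<^sup>2 * 4" by (intro mult_left_mono) auto
    also have "\<dots> = t * (4 * t)" by (simp add: power2_eq_square)
    also have "\<dots> < t * (2 * d * \<kappa>)" using t by (intro mult_strict_left_mono) auto
    finally show ?thesis by simp
  qed
  ultimately have "(norm (q - d *\<^sub>R u))\<^sup>2 < d\<^sup>2" by simp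
  then have qb: "norm (q - d *\<^sub>R u) < d" using d by (smt (verit) power2_le_imp_le norm_ge_zero)
  have qt: "norm (tangential q) < \<rho>" using t tu by (simp add: q_def wt) (smt (verit) mult_left_le)
  have qv: "\<bar>vertical q\<bar> < h"
  proof -
    have "\<bar>vertical q\<bar> \<le> t * norm w" using abs_vertical_le[of q] t by (simp add: q_def)
    also have "\<dots> \<le> t * 2" using nw t by (intro mult_left_mono) auto
    finally show ?thesis using t by simp
  qed
  have "\<sigma> * (vertical q - \<phi> (tangential q)) < 0" by (rule side[OF qb qt qv])
  moreover have "\<sigma> * vertical q = t * \<kappa>" using swv by (simp add: q_def algebra_simps)
  moreover have "\<bar>\<phi> (tangential q)\<bar> \<le> (\<kappa>/2) * t"
  proof -
    have nt: "norm (tangential q) \<le> t" using t tu by (simp add: q_def wt)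
    then have "\<bar>\<phi> (tangential q)\<bar> \<le> (\<kappa>/2) * norm (tangential q)" using dl(2) t by simp
    also have "\<dots> \<le> (\<kappa>/2) * t" using nt kpos by (intro mult_left_mono) auto
    finally show ?thesis .
  qed
  moreover have "\<bar>\<sigma> * \<phi> (tangential q)\<bar> = \<bar>\<phi> (tangential q)\<bar>" using sa by (simp add: abs_mult)
  moreover have "t * \<kappa> > 0" using t kpos by simp
  ultimately show False by (simp add: algebra_simps)
qed


lemma chart_facts:
  fixes \<Omega> :: "(real^('m::finite option)) set" and n :: "real^('m option) \<Rightarrow> real^('m option)"
  assumes op: "open \<Omega>" and r: "r > 0" and on: "outward_normal \<Omega> n"
    and lipA: "\<forall>x\<in>frontier \<Omega>. \<forall>y\<in>frontier \<Omega>. norm (n x - n y) \<le> norm (x - y) / r"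
    and x0: "x0 \<in> frontier \<Omega>"
  shows "norm (n x0) = 1"
    and "\<And>s. 0 < s \<Longrightarrow> s < r \<Longrightarrow> \<exists>\<delta>>0. \<forall>p\<in>frontier \<Omega>. norm (p - x0) < \<delta> \<longrightarrow>
            2 * s * \<bar>(p - x0) \<bullet> n x0\<bar> \<le> (norm (p - x0))\<^sup>2"
    and "\<exists>\<epsilon>>0. \<forall>t. 0 < t \<longrightarrow> t < \<epsilon> \<longrightarrow> x0 - t *\<^sub>R n x0 \<in> \<Omega> \<and> x0 + t *\<^sub>R n x0 \<in> - closure \<Omega>"
    and "\<And>a d. 0 < d \<Longrightarrow> dist x0 a = d \<Longrightarrow> ball a d \<subseteq> \<Omega> \<Longrightarrow> - n x0 = (1/d) *\<^sub>R (a - x0)"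
    and "\<And>a d. 0 < d \<Longrightarrow> dist x0 a = d \<Longrightarrow> ball a d \<subseteq> - closure \<Omega> \<Longrightarrow> n x0 = (1/d) *\<^sub>R (a - x0)"
proof -
  have lip: "norm (n x - n y) \<le> norm (x - y) / r" if "x \<in> frontier \<Omega>" "y \<in> frontier \<Omega>" for x y
    using lipA that by blast
  obtain \<rho> h A c \<phi> g where ch: "C1_chart \<Omega> x0 \<rho> h A c \<phi> g" and
    fm: "\<And>y. y \<in> ball 0 \<rho> \<Longrightarrow> n (matrix_inv A *v (join y (\<phi> y) - c)) =
          matrix_inv A *v ((1 / sqrt ((norm (g y))\<^sup>2 + 1)) *\<^sub>R join (- g y) 1)"
    using on x0 unfolding outward_normal_def by blast
  have rho: "\<rho> > 0" and h: "h > 0" and oA: "orthogonal_matrix A" and Ax0: "A *v x0 + c = 0"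
    and phr: "\<And>y. y \<in> cball 0 \<rho> \<Longrightarrow> \<phi> y \<in> {-h<..<h}" and p0: "\<phi> 0 = 0" and g0: "g 0 = 0"
    and cg: "continuous_on (cball 0 \<rho>) g"
    and der: "\<And>y. y \<in> cball 0 \<rho> \<Longrightarrow> (\<phi> has_derivative (\<lambda>v. g y \<bullet> v)) (at y within cball 0 \<rho>)"
    and s1: "{x. norm (tangential x) < \<rho> \<and> \<bar>vertical x\<bar> < h} \<inter> (\<lambda>x. A *v x + c) ` \<Omega> =
        {x\<in>{x. norm (tangential x) < \<rho> \<and> \<bar>vertical x\<bar> < h}. vertical x < \<phi> (tangential x)}"
    and s2: "{x. norm (tangential x) < \<rho> \<and> \<bar>vertical x\<bar> < h} \<inter> (\<lambda>x. A *v x + c) ` frontier \<Omega> =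
        {x\<in>{x. norm (tangential x) < \<rho> \<and> \<bar>vertical x\<bar> < h}. vertical x = \<phi> (tangential x)}"
    using ch unfolding C1_chart_def Let_def by auto
  interpret rigid A c by unfold_locales (rule oA)
  have Tdef: "(\<lambda>x. A *v x + c) = T" by (simp add: T_def fun_eq_iff)
  define C where "C = {x::real^('m option). norm (tangential x) < \<rho> \<and> \<bar>vertical x\<bar> < h}"
  have inO: "Ti q \<in> \<Omega> \<longleftrightarrow> vertical q < \<phi> (tangential q)" if "q \<in> C" for q
    using s1 that unfolding Tdef T_image C_def by blast
  have inF: "Ti q \<in> frontier \<Omega> \<longleftrightarrow> vertical q = \<phi> (tangential q)" if "q \<in> C" for q
    using s2 that unfolding Tdef T_image C_def by blast
  have T0: "T x0 = 0" using Ax0 by (simp add: T_def)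
  have Ti0: "Ti 0 = x0" using Ti_T[of x0] T0 by simp
  have mi: "matrix_inv A = transpose A" by (rule orth_matrix_inv[OF oA])
  define \<nu> where "\<nu> y = (1 / sqrt ((norm (g y))\<^sup>2 + 1)) *\<^sub>R join (- g y) 1" for y
  have fm': "n (Ti (join y (\<phi> y))) = transpose A *v \<nu> y" if "y \<in> ball 0 \<rho>" for y
    using fm[OF that] by (simp only: mi Ti_def \<nu>_def)
  have nu0: "\<nu> 0 = join 0 1" by (simp add: \<nu>_def g0)
  have n0: "n x0 = transpose A *v join 0 1" using fm'[of 0] rho p0 Ti0 nu0 by simp
  have An0: "A *v n x0 = join 0 1" unfolding n0 by (rule orth_inv_right[OF oA])
  show N1: "norm (n x0) = 1" unfolding n0 normAt by (rule norm_eN)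
  have graphF: "Ti (join y (\<phi> y)) \<in> frontier \<Omega>" if "y \<in> ball 0 \<rho>" for y
  proof -
    have "\<phi> y \<in> {-h<..<h}" using phr[of y] that by simp
    then have "join y (\<phi> y) \<in> C" using that by (simp add: C_def abs_less_iff)
    then show ?thesis using inF by simp
  qed
  have lipn: "norm (\<nu> y - join 0 1) \<le> norm (join y (\<phi> y)) / r" if "y \<in> ball 0 \<rho>" for y
  proof -
    have "A *v (n (Ti (join y (\<phi> y))) - n x0) = A *v n (Ti (join y (\<phi> y))) - A *v n x0"
      by (rule matrix_vector_mult_diff_distrib)
    also have "\<dots> = \<nu> y - join 0 1" unfolding fm'[OF that] n0 orth_inv_right[OF oA] ..
    finally have "\<nu> y - join 0 1 = A *v (n (Ti (join y (\<phi> y))) - n x0)" ..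
    then have "norm (\<nu> y - join 0 1) = norm (n (Ti (join y (\<phi> y))) - n x0)" by (simp add: normA)
    also have "\<dots> \<le> norm (Ti (join y (\<phi> y)) - x0) / r" using lip graphF[OF that] x0 by blast
    also have "norm (Ti (join y (\<phi> y)) - x0) = norm (join y (\<phi> y))"
      using Ti0 Ti_diff[of "join y (\<phi> y)" 0] normAt by simp
    finally show ?thesis .
  qed
  have small: "\<exists>\<delta>>0. \<forall>z. norm z < \<delta> \<longrightarrow> \<bar>\<phi> z\<bar> \<le> \<eta> * norm z" if "\<eta> > 0" for \<eta>
  proof -
    have c0: "(0::real^'m) \<in> cball 0 \<rho>" using rho by simp
    show ?thesis using phi_small[of \<rho> \<phi> g \<eta>, OF rho p0 g0 der[OF c0] that] .
  qed
  have Tp: "T p = A *v (p - x0)" for p using Ax0 by (simp add: T_def matrix_vector_mult_diff_distrib algebra_simps)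
  have nTp: "norm (T p) = norm (p - x0)" for p by (simp add: Tp normA)
  have vTp: "vertical (T p) = (p - x0) \<bullet> n x0" for p
  proof -
    have "(p - x0) \<bullet> n x0 = (A *v (p - x0)) \<bullet> (A *v n x0)" by (simp add: orth_inner[OF oA])
    also have "\<dots> = T p \<bullet> join 0 1" by (simp add: Tp An0)
    finally show ?thesis by (simp add: inner_commute inner_join)
  qed
  show "\<exists>\<delta>>0. \<forall>p\<in>frontier \<Omega>. norm (p - x0) < \<delta> \<longrightarrow> 2 * s * \<bar>(p - x0) \<bullet> n x0\<bar> \<le> (norm (p - x0))\<^sup>2"
    if s: "0 < s" "s < r" for s
  proof -
    define \<epsilon> where "\<epsilon> = (r - s) / s"
    have e: "\<epsilon> > 0" "s * (1 + \<epsilon>) = r" using s by (auto simp: \<epsilon>_def field_simps)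
    obtain \<delta> where d: "\<delta> > 0" "\<And>z. norm z < \<delta> \<Longrightarrow> 2 * r * \<bar>\<phi> z\<bar> \<le> (1 + \<epsilon>) * (norm z)\<^sup>2"
      using phi_quad[OF rho r p0 g0 cg der lipn[unfolded \<nu>_def] e(1)] by blast
    show ?thesis
    proof (intro exI[of _ "min \<delta> (min \<rho> h)"] conjI ballI impI)
      show "0 < min \<delta> (min \<rho> h)" using d rho h by simp
      fix p assume pF: "p \<in> frontier \<Omega>" and pn: "norm (p - x0) < min \<delta> (min \<rho> h)"
      define q where "q = T p"
      have nq: "norm q < min \<delta> (min \<rho> h)" using pn nTp by (simp add: q_def)
      have "q \<in> C" using nq norm_tangential_le[of q] abs_vertical_le[of q] by (simp add: C_def)
      moreover have "Ti q \<in> frontier \<Omega>" using pF by (simp add: q_def)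
      ultimately have vq: "vertical q = \<phi> (tangential q)" using inF by blast
      have nt: "norm (tangential q) < \<delta>" using nq norm_tangential_le[of q] by simp
      have "2 * s * \<bar>(p - x0) \<bullet> n x0\<bar> = (s / r) * (2 * r * \<bar>\<phi> (tangential q)\<bar>)"
        using r vq vTp[of p] by (simp add: q_def field_simps)
      also have "\<dots> \<le> (s / r) * ((1 + \<epsilon>) * (norm (tangential q))\<^sup>2)"
        using d(2)[OF nt] s r by (intro mult_left_mono) auto
      also have "\<dots> = (s * (1 + \<epsilon>)) / r * (norm (tangential q))\<^sup>2" by simp
      also have "\<dots> = (norm (tangential q))\<^sup>2" using e(2) r by simp
      also have "\<dots> \<le> (norm q)\<^sup>2" using norm_split[of q] by simp
      also have "\<dots> = (norm (p - x0))\<^sup>2" by (simp add: q_def nTp)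
      finally show "2 * s * \<bar>(p - x0) \<bullet> n x0\<bar> \<le> (norm (p - x0))\<^sup>2" .
    qed
  qed
  have Tline: "T (x0 + t *\<^sub>R n x0) = join 0 t" for t
  proof -
    have "T (x0 + t *\<^sub>R n x0) = A *v (t *\<^sub>R n x0)" by (simp add: Tp)
    also have "\<dots> = t *\<^sub>R (A *v n x0)" by (simp add: matrix_vector_mult_scaleR)
    finally show ?thesis by (simp add: An0 join_scaleR)
  qed
  show "\<exists>\<epsilon>>0. \<forall>t. 0 < t \<longrightarrow> t < \<epsilon> \<longrightarrow> x0 - t *\<^sub>R n x0 \<in> \<Omega> \<and> x0 + t *\<^sub>R n x0 \<in> - closure \<Omega>"
  proof (intro exI[of _ h] conjI allI impI)
    show "h > 0" by (rule h)
    fix t :: real assume t: "0 < t" "t < h"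
    have C1: "join 0 (-t) \<in> C" "join 0 t \<in> C" using t rho by (auto simp: C_def)
    have "x0 - t *\<^sub>R n x0 = Ti (join 0 (-t))" using Tline[of "-t"] Ti_T by (metis scaleR_minus_left diff_conv_add_uminus)
    then show "x0 - t *\<^sub>R n x0 \<in> \<Omega>" using inO[OF C1(1)] t p0 by simp
    have e2: "x0 + t *\<^sub>R n x0 = Ti (join 0 t)" using Tline[of t] Ti_T by metis
    have "x0 + t *\<^sub>R n x0 \<notin> \<Omega>" "x0 + t *\<^sub>R n x0 \<notin> frontier \<Omega>"
      using inO[OF C1(2)] inF[OF C1(2)] t p0 e2 by simp_all
    then show "x0 + t *\<^sub>R n x0 \<in> - closure \<Omega>" using closure_Un_frontier[of \<Omega>] by blast
  qed
  have Hgen: "u = (- \<sigma>) *\<^sub>R join 0 1"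
    if sg: "\<sigma> = 1 \<or> \<sigma> = -1" and d: "0 < d" and dd: "dist x0 a = d" and u: "u = (1/d) *\<^sub>R (A *v (a - x0))"
      and sd: "\<And>q. q \<in> C \<Longrightarrow> Ti q \<in> ball a d \<Longrightarrow> \<sigma> * (vertical q - \<phi> (tangential q)) < 0" for \<sigma> d a u
  proof (rule tangent_ball[OF sg _ d rho h small])
    have "norm (A *v (a - x0)) = d" using dd by (simp add: normA dist_norm norm_minus_commute)
    then show "norm u = 1" using d by (simp add: u)
    show "\<sigma> * (vertical q - \<phi> (tangential q)) < 0"
      if "norm (q - d *\<^sub>R u) < d" "norm (tangential q) < \<rho>" "\<bar>vertical q\<bar> < h" for q
    proof (rule sd)
      show "q \<in> C" using that by (simp add: C_def)
      have Ta: "T a = d *\<^sub>R u" using d by (simp add: u Tp)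
      have "dist a (Ti q) = norm (Ti q - Ti (T a))" by (simp add: dist_norm norm_minus_commute)
      also have "\<dots> = norm (q - T a)" unfolding Ti_diff normAt ..
      finally show "Ti q \<in> ball a d" using that(1) Ta by simp
    qed
  qed (simp add: small)
  have hback: "(1/d) *\<^sub>R (a - x0) = (- \<sigma>) *\<^sub>R n x0"
    if "u = (- \<sigma>) *\<^sub>R join 0 1" "u = (1/d) *\<^sub>R (A *v (a - x0))" "d > 0" for \<sigma> d a u
  proof -
    have "(1/d) *\<^sub>R (a - x0) = transpose A *v ((1/d) *\<^sub>R (A *v (a - x0)))"
      by (simp only: matrix_vector_mult_scaleR orth_inv_left[OF oA])
    also have "\<dots> = transpose A *v ((- \<sigma>) *\<^sub>R join 0 1)" using that by simp
    also have "\<dots> = (- \<sigma>) *\<^sub>R n x0" by (simp only: matrix_vector_mult_scaleR n0)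
    finally show ?thesis .
  qed
  show "- n x0 = (1/d) *\<^sub>R (a - x0)" if d: "0 < d" and dd: "dist x0 a = d" and b: "ball a d \<subseteq> \<Omega>" for a d
  proof -
    have "(1/d) *\<^sub>R (A *v (a - x0)) = (- 1) *\<^sub>R join 0 1"
      by (rule Hgen[of 1 d a]) (use d dd b inO in auto)
    then show ?thesis using hback[of "(1/d) *\<^sub>R (A *v (a - x0))" 1 d a] d by simp
  qed
  show "n x0 = (1/d) *\<^sub>R (a - x0)" if d: "0 < d" and dd: "dist x0 a = d" and b: "ball a d \<subseteq> - closure \<Omega>" for a d
  proof -
    have "(1/d) *\<^sub>R (A *v (a - x0)) = (- (-1)) *\<^sub>R join 0 1"
    proof (rule Hgen[of "-1" d a])
      fix q assume q: "q \<in> C" "Ti q \<in> ball a d"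
      then have "Ti q \<notin> closure \<Omega>" using b by blast
      then have "Ti q \<notin> \<Omega>" "Ti q \<notin> frontier \<Omega>" using closure_Un_frontier[of \<Omega>] by auto
      then show "- 1 * (vertical q - \<phi> (tangential q)) < 0" using inO[OF q(1)] inF[OF q(1)] by simp
    qed (use d dd in auto)
    then show ?thesis using hback[of "(1/d) *\<^sub>R (A *v (a - x0))" "-1" d a] d by simp
  qed
qed


lemma L_imp_S:
  fixes \<Omega> :: "(real^('m::finite option)) set"
  assumes op: "open \<Omega>" and r: "r > 0" and L: "cond_L r \<Omega>"
  shows "cond_S r \<Omega>"
proof -
  obtain n where on: "outward_normal \<Omega> n"
    and lip0: "\<forall>x0\<in>frontier \<Omega>. \<forall>y0\<in>frontier \<Omega>. norm (n x0 - n y0) \<le> (1 / r) * norm (x0 - y0)"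
    using L unfolding cond_L_def by blast
  have lip: "norm (n x - n y) \<le> norm (x - y) / r" if "x \<in> frontier \<Omega>" "y \<in> frontier \<Omega>" for x y
    using lip0 that by simp
  have lipA: "\<forall>x\<in>frontier \<Omega>. \<forall>y\<in>frontier \<Omega>. norm (n x - n y) \<le> norm (x - y) / r"
    using lip by blast
  note cf = chart_facts[OF op r on lipA]
  have frc: "frontier (- closure \<Omega>) \<subseteq> frontier \<Omega>"
  proof -
    have "frontier (- closure \<Omega>) = frontier (closure \<Omega>)" by simp
    also have "\<dots> = closure \<Omega> - interior (closure \<Omega>)" by (simp add: frontier_def)
    also have "\<dots> \<subseteq> closure \<Omega> - interior \<Omega>" using interior_mono[OF closure_subset[of \<Omega>]] by blast
    finally show ?thesis by (simp add: frontier_def)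
  qed
  have inner: "ball (x0 + r *\<^sub>R (- n x0)) r \<subseteq> \<Omega>" if x0: "x0 \<in> frontier \<Omega>" for x0
  proof (rule global_ball[where m = "\<lambda>x. - n x" and F = "frontier \<Omega>", OF frontier_closed _ r _ _ _ _ _ x0])
    show "frontier \<Omega> \<subseteq> frontier \<Omega>" by simp
    show "norm (- n x) = 1" if "x \<in> frontier \<Omega>" for x using cf(1)[OF that] by simp
    show "norm (- n x - - n y) \<le> norm (x - y) / r" if "x \<in> frontier \<Omega>" "y \<in> frontier \<Omega>" for x y
      using lip[OF that] by (simp add: norm_minus_commute)
    show "\<exists>\<delta>>0. \<forall>p\<in>frontier \<Omega>. norm (p - x) < \<delta> \<longrightarrow> 2 * s * \<bar>(p - x) \<bullet> - n x\<bar> \<le> (norm (p - x))\<^sup>2"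
      if "x \<in> frontier \<Omega>" "0 < s" "s < r" for x s
      using cf(2)[OF that] by simp
    show "- n y = (1 / d) *\<^sub>R (a - y)" if "y \<in> frontier \<Omega>" "0 < d" "ball a d \<subseteq> \<Omega>" "dist y a = d" for y a d
      using cf(4)[OF that(1,2,4,3)] .
    show "\<exists>\<epsilon>>0. \<forall>t. 0 < t \<longrightarrow> t < \<epsilon> \<longrightarrow> x + t *\<^sub>R - n x \<in> \<Omega>" if "x \<in> frontier \<Omega>" for x
      using cf(3)[OF that] by (simp add: algebra_simps) (metis diff_conv_add_uminus)
  qed
  have outer: "ball (x0 + r *\<^sub>R n x0) r \<subseteq> - closure \<Omega>" if x0: "x0 \<in> frontier \<Omega>" for x0
  proof (rule global_ball[where m = n and F = "frontier \<Omega>", OF frontier_closed frc r _ _ _ _ _ x0])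
    show "norm (n x) = 1" if "x \<in> frontier \<Omega>" for x using cf(1)[OF that] .
    show "norm (n x - n y) \<le> norm (x - y) / r" if "x \<in> frontier \<Omega>" "y \<in> frontier \<Omega>" for x y
      using lip[OF that] .
    show "\<exists>\<delta>>0. \<forall>p\<in>frontier \<Omega>. norm (p - x) < \<delta> \<longrightarrow> 2 * s * \<bar>(p - x) \<bullet> n x\<bar> \<le> (norm (p - x))\<^sup>2"
      if "x \<in> frontier \<Omega>" "0 < s" "s < r" for x s
      using cf(2)[OF that] .
    show "n y = (1 / d) *\<^sub>R (a - y)" if "y \<in> frontier \<Omega>" "0 < d" "ball a d \<subseteq> - closure \<Omega>" "dist y a = d" for y a d
      using cf(5)[OF that(1,2,4,3)] .
    show "\<exists>\<epsilon>>0. \<forall>t. 0 < t \<longrightarrow> t < \<epsilon> \<longrightarrow> x + t *\<^sub>R n x \<in> - closure \<Omega>" if "x \<in> frontier \<Omega>" for x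
      using cf(3)[OF that] by blast
  qed
  show ?thesis unfolding cond_S_def
  proof
    fix x0 assume x0: "x0 \<in> frontier \<Omega>"
    show "\<exists>a b. ball a r \<subseteq> \<Omega> \<and> ball b r \<subseteq> - closure \<Omega> \<and> dist x0 a = r \<and> dist x0 b = r"
    proof (intro exI conjI)
      show "ball (x0 + r *\<^sub>R (- n x0)) r \<subseteq> \<Omega>" by (rule inner[OF x0])
      show "ball (x0 + r *\<^sub>R n x0) r \<subseteq> - closure \<Omega>" by (rule outer[OF x0])
      show "dist x0 (x0 + r *\<^sub>R - n x0) = r" using cf(1)[OF x0] r by (simp add: dist_norm)
      show "dist x0 (x0 + r *\<^sub>R n x0) = r" using cf(1)[OF x0] r by (simp add: dist_norm)
    qed
  qed
qed


theorem theorem1p1: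
  fixes \<Omega> :: "(real^('m::finite option)) set" and r :: real
  assumes "open \<Omega>" and "connected \<Omega>" and "r > 0"
  shows "cond_S r \<Omega> \<longleftrightarrow> cond_L r \<Omega>"
  using S_imp_L[OF assms(1) assms(3)] L_imp_S[OF assms(1) assms(3)] by blast

end
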